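(* Let $g,f,h$ be as in the parametrization, $S=g^{-1}h$, and for a fixed integer $k$ let $V_g:=Y_k(S)$ and $V_f:=Y_{d-k}(S^{-1})$, viewed as mixed tensors $(V_g)^\mu{}_\nu$, $(V_f)^\mu{}_\nu$. Then the projections of $V_g$ relative to the Eulerian observer of $g$ are $$\boldsymbol\rho[V_g]=-e_k(B),\qquad \boldsymbol j[V_g]_i=-\gamma_{il}W^l{}_r\mathsf n^r,\qquad \boldsymbol J[V_g]^i{}_l=\big(\mathcal V\,I-W+\tfrac{M}{N}U\big)^i{}_l,$$ and the projections of $V_f$ relative to the Eulerian observer of $f$ are $$\boldsymbol\rho[V_f]=-\lambda\,e_{k-1}(\tilde D)\det(em^{-1}),\quad \boldsymbol j[V_f]_i=-\boldsymbol j[V_g]_i\det(em^{-1}),\quad \boldsymbol J[V_f]^i{}_l=\big(\tilde{\mathcal V} I-\tilde Q U+\tfrac{N}{M}\tilde U\big)^i{}_l\det(em^{-1}).$$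
   Context: $s=d-1\ge1$. $e_k(X)$ via $\det(I+tX)=\sum_ke_k(X)t^k$ ($e_k=0$ for $k<0$); $Y_k(X)=\sum_{i=0}^k(-1)^{k+i}e_i(X)X^{k-i}$, $Y_{-1}=0$. Data: $N,M>0$, $q,v\in\mathbb R^s$ with $v^{\mathsf T}v<1$, $\lambda=(1-v^{\mathsf T}v)^{-1/2}$, $\hat\Lambda=(I-vv^{\mathsf T})^{-1/2}$, $e,m$ invertible $s\times s$ with $\chi=e^{\mathsf T}\hat\Lambda m$ symmetric positive definite; $\gamma=e^{\mathsf T}e$, $\varphi=m^{\mathsf T}m$, $\mathsf n=e^{-1}v$, $Q=e^{-1}\hat\Lambda^2e$, $\tilde Q=m^{-1}\hat\Lambda^2m$, $\tilde D=e^{-1}\hat\Lambda^{-1}m$, $B=e^{-1}\hat\Lambda m$, $U=\lambda^{-1}Y_{k-1}(B)$, $\tilde U=\tilde DY_{k-1}(\tilde D)$, $W=BY_{k-1}(\tilde D)$, $\mathcal V=e_k(\tilde D)$, $\tilde{\mathcal V}=\lambda^{-1}e_{k-1}(B)$. With $\Xi[\xi]=\begin{pmatrix}1&0\\\xi&I_s\end{pmatrix}$, $H^2=NM/\lambda$, shifts $\vec N=q+Ne^{-1}v$, $\vec M=q-Mm^{-1}v$: $h=\Xi[q]^{\mathsf T}\mathrm{diag}(-H^2,\chi)\Xi[q]$, $g=\Xi[\vec N]^{\mathsf T}\mathrm{diag}(-N^2,\gamma)\Xi[\vec N]$, $f=\Xi[\vec M]^{\mathsf T}\mathrm{diag}(-M^2,\varphi)\Xi[\vec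 M]$. Projections relative to a metric $G$ with lapse $A$ and shift $\vec A$ and spatial metric $\sigma$: unit normal $n_\mu=(-A,0)$, $n^\mu=(A^{-1},-A^{-1}\vec A)$, projector $\perp^\mu{}_\nu=\delta^\mu_\nu+n^\mu n_\nu$; for a mixed tensor $X^\mu{}_\nu$ with $X_{\mu\nu}=G_{\mu\alpha}X^\alpha{}_\nu$: $\boldsymbol\rho[X]=n^\mu X_{\mu\nu}n^\nu$, $\boldsymbol j[X]_\nu=-\perp^\rho{}_\nu X_{\rho\sigma}n^\sigma$, $\boldsymbol J[X]_{\mu\nu}=\perp^\rho{}_\mu X_{\rho\sigma}\perp^\sigma{}_\nu$, with spatial components taken in the coordinates $x^i$ and indices raised by $\sigma^{-1}$. For $V_g$ use $G=g$ ($A=N$, $\sigma=\gamma$), for $V_f$ use $G=f$ ($A=M$, $\sigma=\varphi$). *)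

theory Defs
  imports "HOL-Analysis.Analysis" "HOL-Computational_Algebra.Polynomial"
begin

primrec mpow :: "real^('n::finite)^'n \<Rightarrow> nat \<Rightarrow> real^('n::finite)^'n" where
  "mpow X 0 = mat 1"
| "mpow X (Suc n) = X ** mpow X n"

definition detpoly :: "real^('n::finite)^'n \<Rightarrow> real poly" where
  "detpoly X = (THE p. \<forall>t. poly p t = det (mat 1 + t *\<^sub>R X))"

definition esym :: "int \<Rightarrow> real^('n::finite)^'n \<Rightarrow> real" where
  "esym k X = (if k < 0 then 0 else coeff (detpoly X) (nat k))"

definition Ymat :: "int \<Rightarrow> real^('n::finite)^'n \<Rightarrow> real^('n::finite)^'n" where
  "Ymat k X = (\<Sum>i\<in>{0..k}. ((-1) ^ nat (k + i) * esym i X) *\<^sub>R mpow X (nat (k - i)))"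

definition posdef :: "real^('n::finite)^'n \<Rightarrow> bool" where
  "posdef A \<longleftrightarrow> transpose A = A \<and> (\<forall>x. x \<noteq> 0 \<longrightarrow> x \<bullet> (A *v x) > 0)"

definition inv_sqrt :: "real^('n::finite)^'n \<Rightarrow> real^('n::finite)^'n" where
  "inv_sqrt X = (THE R. posdef R \<and> R ** R = matrix_inv X)"

definition outer :: "real^'n \<Rightarrow> real^'n \<Rightarrow> real^('n::finite)^'n" where
  "outer u w = (\<chi> i j. u $ i * w $ j)"

(* d = s+1 dimensional objects: index type 's option, None = time index 0 *)
definition Xi :: "real^('s::finite) \<Rightarrow> real^('s option)^('s option)" where
  "Xi \<xi> = (\<chi> a b. case (a, b) of (None, None) \<Rightarrow> 1 | (None, Some j) \<Rightarrow> 0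
                   | (Some i, None) \<Rightarrow> \<xi> $ i | (Some i, Some j) \<Rightarrow> (if i = j then 1 else 0))"

definition blockdiag :: "real \<Rightarrow> real^('s::finite)^'s \<Rightarrow> real^('s option)^('s option)" where
  "blockdiag a X = (\<chi> p q. case (p, q) of (None, None) \<Rightarrow> a
                   | (Some i, Some j) \<Rightarrow> X $ i $ j | _ \<Rightarrow> 0)"

definition adm :: "real \<Rightarrow> real^('s::finite)^'s \<Rightarrow> real^('s::finite) \<Rightarrow> real^('s option)^('s option)" where
  "adm a X \<xi> = transpose (Xi \<xi>) ** blockdiag a X ** Xi \<xi>"

definition nup :: "real \<Rightarrow> real^('s::finite) \<Rightarrow> real^('s::finite option)" where
  "nup A sh = (\<chi> p. case p of None \<Rightarrow> 1 / A | Some i \<Rightarrow> - sh $ i / A)"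

definition ndn :: "real \<Rightarrow> real^('s::finite option)" where
  "ndn A = (\<chi> p. case p of None \<Rightarrow> - A | Some i \<Rightarrow> 0)"

definition perp :: "real \<Rightarrow> real^('s::finite) \<Rightarrow> real^('s option)^('s option)" where
  "perp A sh = (\<chi> p q. (if p = q then 1 else 0) + nup A sh $ p * ndn A $ q)"

(* rho[X] = n^mu X_{mu nu} n^nu with X_{mu nu} = G_{mu alpha} X^alpha_nu *)
definition proj_rho :: "real^('s option)^('s option) \<Rightarrow> real \<Rightarrow> real^('s::finite)
     \<Rightarrow> real^('s option)^('s option) \<Rightarrow> real" where
  "proj_rho G A sh X = nup A sh \<bullet> ((G ** X) *v nup A sh)"

(* spatial components j_i of j[X]_nu = - perp^rho_nu X_{rho sigma} n^sigma *)
definition proj_j :: "real^('s option)^('s option) \<Rightarrow> real \<Rightarrow> real^('s::finite)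
     \<Rightarrow> real^('s option)^('s option) \<Rightarrow> real^('s::finite)" where
  "proj_j G A sh X = (\<chi> i. - ((transpose (perp A sh) *v ((G ** X) *v nup A sh)) $ Some i))"

(* spatial components J^i_l = (sigma^{-1})^{ij} J_{jl},
   J_{mu nu} = perp^rho_mu X_{rho sigma} perp^sigma_nu *)
definition proj_J :: "real^('s option)^('s option) \<Rightarrow> real \<Rightarrow> real^('s::finite) \<Rightarrow> real^('s::finite)^'s
     \<Rightarrow> real^('s option)^('s option) \<Rightarrow> real^('s::finite)^'s" where
  "proj_J G A sh \<sigma> X = matrix_inv \<sigma> **
      (\<chi> i l. (transpose (perp A sh) ** (G ** X) ** perp A sh) $ Some i $ Some l)"

end

theory Submission
  imports Defs
begin

lemma poly_det:
  fixes Mp :: "real poly^'n::finite^'n"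
  shows "poly (det Mp) t = det (\<chi> i j. poly (Mp$i$j) t)"
  unfolding det_def by (simp add: poly_sum poly_prod of_int_poly)

lemma degree_det_le:
  fixes Mp :: "real poly^'n::finite^'n"
  assumes "\<And>i j. degree (Mp$i$j) \<le> w j"
  shows "degree (det Mp) \<le> sum w UNIV"
  unfolding det_def
proof (rule degree_sum_le)
  show "finite {p. p permutes (UNIV::'n set)}" by (simp add: finite_permutations)
  fix p assume "p \<in> {p. p permutes (UNIV::'n set)}"
  hence p: "p permutes (UNIV::'n set)" by simp
  have "degree (of_int (sign p) * (\<Prod>i\<in>UNIV. Mp $ i $ p i)) \<le> degree (\<Prod>i\<in>UNIV. Mp $ i $ p i)"
    by (metis degree_mult_le degree_of_int add_0)
  also have "\<dots> \<le> sum (degree \<circ> (\<lambda>i. Mp $ i $ p i)) UNIV"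
    by (rule degree_prod_sum_le) simp
  also have "\<dots> \<le> sum (\<lambda>i. w (p i)) UNIV"
    by (rule sum_mono) (simp add: assms)
  also have "\<dots> = sum w UNIV"
    using sum.reindex_bij_betw[OF permutes_imp_bij[OF p], of w] by simp
  finally show "degree (of_int (sign p) * (\<Prod>i\<in>UNIV. Mp $ i $ p i)) \<le> sum w UNIV" .
qed

definition cpm :: "real^'n^'n \<Rightarrow> real poly^'n^('n::finite)" where
  "cpm X = (\<chi> i j. [:if i = j then 1 else 0, X$i$j:])"

definition cp :: "real^'n^('n::finite) \<Rightarrow> real poly" where
  "cp X = det (cpm X)"

lemma poly_cp: "poly (cp X) t = det (mat 1 + t *\<^sub>R X)"
  unfolding cp_def poly_det cpm_def
  by (rule arg_cong[where f=det]) (simp add: vec_eq_iff mat_def algebra_simps)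

lemma degree_cp: "degree (cp (X::real^'n^('n::finite))) \<le> CARD('n)"
proof -
  have "degree (cp X) \<le> sum (\<lambda>j. 1::nat) (UNIV::'n set)"
    unfolding cp_def by (rule degree_det_le) (simp add: cpm_def)
  thus ?thesis by simp
qed

lemma detpoly_cp: "detpoly X = cp X"
  unfolding detpoly_def
proof (rule the_equality)
  show "\<forall>t. poly (cp X) t = det (mat 1 + t *\<^sub>R X)" by (simp add: poly_cp)
  fix p assume "\<forall>t. poly p t = det (mat 1 + t *\<^sub>R X)"
  hence "poly p = poly (cp X)" by (simp add: fun_eq_iff poly_cp)
  thus "p = cp X" by (simp add: poly_eq_poly_eq_iff)
qed

lemma esym_cp: "esym k X = (if k < 0 then 0 else coeff (cp X) (nat k))"
  by (simp add: esym_def detpoly_cp)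

lemma esym_neg[simp]: "k < 0 \<Longrightarrow> esym k X = 0"
  by (simp add: esym_def)

lemma esym_big: "int CARD('n) < k \<Longrightarrow> esym k (X::real^'n^('n::finite)) = 0"
  using degree_cp[of X] by (simp add: esym_cp coeff_eq_0)

lemma esym_0[simp]: "esym 0 X = 1"
proof -
  have "coeff (cp X) 0 = poly (cp X) 0" by (simp add: poly_0_coeff_0)
  thus ?thesis by (simp add: esym_cp poly_cp)
qed

lemma cp_sum: "poly (cp (X::real^'n^('n::finite))) t = (\<Sum>j\<le>CARD('n). esym (int j) X * t ^ j)"
proof -
  have "poly (cp X) t = (\<Sum>i\<le>degree (cp X). coeff (cp X) i * t ^ i)" by (simp add: poly_altdef)
  also have "\<dots> = (\<Sum>j\<le>CARD('n). coeff (cp X) j * t ^ j)"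
    by (rule sum.mono_neutral_left) (use degree_cp[of X] in \<open>auto simp: coeff_eq_0\<close>)
  finally show ?thesis by (simp add: esym_cp)
qed


lemma mm_radd: "((A::real^'n^'m) + B) ** C = A ** C + B ** C"
  by (simp add: matrix_matrix_mult_def vec_eq_iff sum.distrib algebra_simps)
lemma mm_rdiff: "((A::real^'n^'m) - B) ** C = A ** C - B ** C"
  by (simp add: matrix_matrix_mult_def vec_eq_iff sum_subtractf algebra_simps)
lemma mm_ldiff: "(A::real^'n^'m) ** (B - C) = A ** B - A ** C"
  by (simp add: matrix_matrix_mult_def vec_eq_iff sum_subtractf algebra_simps)
lemma mm_rneg: "(- (A::real^'n^'m)) ** C = - (A ** C)"
  by (simp add: matrix_matrix_mult_def vec_eq_iff sum_negf)
lemma mm_lneg: "(A::real^'n^'m) ** (- C) = - (A ** C)"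
  by (simp add: matrix_matrix_mult_def vec_eq_iff sum_negf)
lemma mm_lscale: "(c *\<^sub>R (A::real^'n^'m)) ** C = c *\<^sub>R (A ** C)"
  by (simp add: scalar_matrix_assoc)
lemma mm_rscale: "(A::real^'n^'m) ** (c *\<^sub>R C) = c *\<^sub>R (A ** C)"
  by (simp add: matrix_scalar_ac scalar_matrix_assoc)
lemma mm_lsum: "(sum f S :: real^'n^'m) ** C = (\<Sum>i\<in>S. f i ** C)"
  by (induction S rule: infinite_finite_induct) (auto simp: mm_radd)
lemma mm_rsum: "(C::real^'n^'m) ** (sum f S) = (\<Sum>i\<in>S. C ** f i)"
  by (induction S rule: infinite_finite_induct) (auto simp: matrix_add_ldistrib)
lemma mm_mat: "(A::real^'n^'m) ** mat c = c *\<^sub>R A"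
  by (simp add: matrix_matrix_mult_def mat_def vec_eq_iff if_distrib if_distribR sum.delta' mult.commute cong: if_cong)
lemma mat_mm: "mat c ** (A::real^'n^'m) = c *\<^sub>R A"
  by (simp add: matrix_matrix_mult_def mat_def vec_eq_iff if_distrib if_distribR sum.delta' cong: if_cong)
lemma mat_scaleR: "c *\<^sub>R mat 1 = (mat c :: real^'n^'n)"
  by (simp add: mat_def vec_eq_iff)

lemmas mm_simps = mm_radd mm_rdiff mm_ldiff matrix_add_ldistrib mm_rneg mm_lneg mm_lscale mm_rscale
  mm_mat mat_mm matrix_mul_lid matrix_mul_rid

lemma mpow_comm: "X ** mpow X n = mpow X n ** X"
  by (induction n) (simp_all add: matrix_mul_assoc)

lemma Ymat_neg: "k < 0 \<Longrightarrow> Ymat k X = 0"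
  by (simp add: Ymat_def)

lemma Ymat_rec:
  assumes "0 \<le> k"
  shows "Ymat k X = esym k X *\<^sub>R mat 1 - X ** Ymat (k-1) X"
proof -
  have split: "{0..k} = insert k {0..k-1}" using assms by auto
  have tm: "((-1) ^ nat (k + i) * esym i X) *\<^sub>R mpow X (nat (k - i))
       = - (X ** (((-1) ^ nat (k - 1 + i) * esym i X) *\<^sub>R mpow X (nat (k - 1 - i))))"
    if "i \<in> {0..k-1}" for i
  proof -
    from that have i: "0 \<le> i" "i \<le> k - 1" by auto
    have e1: "nat (k + i) = Suc (nat (k - 1 + i))" using i by simp
    have e2: "nat (k - i) = Suc (nat (k - 1 - i))" using i by simp
    show ?thesis by (simp add: e1 e2 mm_rscale)
  qed
  have "Ymat k X = ((-1) ^ nat (k + k) * esym k X) *\<^sub>R mpow X (nat (k - k))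
        + (\<Sum>i\<in>{0..k-1}. ((-1) ^ nat (k + i) * esym i X) *\<^sub>R mpow X (nat (k - i)))"
    unfolding Ymat_def split by (simp add: sum.insert)
  also have "(-1::real) ^ nat (k + k) = 1"
    by (metis assms mult_2 nat_mult_distrib power_minus1_even zero_le_numeral nat_numeral
        add_mono_thms_linordered_semiring(1) even_mult_iff even_numeral)
  also have "(\<Sum>i\<in>{0..k-1}. ((-1) ^ nat (k + i) * esym i X) *\<^sub>R mpow X (nat (k - i)))
     = - (X ** Ymat (k-1) X)"
    unfolding Ymat_def mm_rsum by (simp add: tm sum_negf)
  finally show ?thesis by simp
qed

lemma Ymat_0: "Ymat 0 X = mat 1"
  by (simp add: Ymat_rec Ymat_neg)

lemma Ymat_comm: "X ** Ymat k X = Ymat k X ** X"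
  unfolding Ymat_def mm_rsum mm_lsum
  by (rule sum.cong) (simp_all add: mm_rscale mm_lscale mpow_comm)


definition adjp :: "real^'n^'n \<Rightarrow> real poly^'n^('n::finite)" where
  "adjp X = (\<chi> k j. det (\<chi> a b. if b = k then [:if a = j then 1 else 0:] else cpm X $ a $ b))"

lemma degree_adjp: "degree (adjp X $ k $ j) \<le> CARD('n) - 1"
  for X :: "real^'n^('n::finite)"
proof -
  have "degree (adjp X $ k $ j) \<le> sum (\<lambda>b. if b = k then 0 else 1::nat) (UNIV::'n set)"
    unfolding adjp_def by (simp, rule degree_det_le) (simp add: cpm_def)
  also have "\<dots> = CARD('n) - 1"
    by (simp add: sum.If_cases card_Diff_singleton Compl_eq_Diff_UNIV)
  finally show ?thesis .
qed

lemma adj_identity: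
  fixes A :: "real^'n^('n::finite)"
  assumes "det A \<noteq> 0"
  shows "(\<Sum>k\<in>UNIV. A$i$k * det (\<chi> a b. if b = k then (if a = j then 1 else 0) else A$a$b))
         = det A * (if i = j then 1 else 0)"
proof -
  define b :: "real^'n" where "b = (\<chi> a. if a = j then 1 else 0)"
  obtain B where B: "A ** B = mat 1" using assms invertible_det_nz invertible_def by blast
  have "A *v (B *v b) = b" by (simp add: matrix_vector_mul_assoc B)
  hence x: "B *v b = (\<chi> k. det(\<chi> i j. if j=k then b$i else A$i$j) / det A)"
    using cramer[OF assms] by blast
  have "A *v (\<chi> k. det(\<chi> i j. if j=k then b$i else A$i$j) / det A) = b"
    using \<open>A *v (B *v b) = b\<close> x by simp
  hence "(A *v (\<chi> k. det(\<chi> i j. if j=k then b$i else A$i$j) / det A)) $ i = b $ i" by simp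
  hence "(\<Sum>k\<in>UNIV. A$i$k * (det(\<chi> i j. if j=k then b$i else A$i$j) / det A)) = b $ i"
    by (simp add: matrix_vector_mult_def)
  hence "(\<Sum>k\<in>UNIV. A$i$k * det(\<chi> i j. if j=k then b$i else A$i$j)) = det A * b $ i"
    using assms by (simp add: sum_divide_distrib[symmetric] field_simps)
  moreover have "(\<chi> i j. if j=k then b$i else A$i$j) = (\<chi> a b. if b=k then (if a = j then 1 else 0) else A$a$b)" for k
    by (simp add: b_def vec_eq_iff)
  ultimately show ?thesis by (simp add: b_def)
qed

lemma poly_adjp: "poly (adjp X $ k $ j) t = det (\<chi> a b. if b = k then (if a = j then 1 else 0) else (mat 1 + t *\<^sub>R X) $ a $ b)"
  unfolding adjp_def vec_lambda_beta poly_det cpm_def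
  by (rule arg_cong[where f=det]) (simp add: vec_eq_iff mat_def algebra_simps)

lemma telescope:
  fixes X :: "real^'n^('n::finite)"
  shows "(mat 1 + t *\<^sub>R X) ** (\<Sum>j<m. t ^ j *\<^sub>R Ymat (int j) X)
      = (\<Sum>j<m. t ^ j * esym (int j) X) *\<^sub>R mat 1 + t ^ m *\<^sub>R (X ** Ymat (int m - 1) X)"
proof (induction m)
  case 0 thus ?case by (simp add: Ymat_neg)
next
  case (Suc m)
  have r: "Ymat (int m) X = esym (int m) X *\<^sub>R mat 1 - X ** Ymat (int m - 1) X"
    using Ymat_rec[of "int m" X] by simp
  have "(mat 1 + t *\<^sub>R X) ** (\<Sum>j<Suc m. t ^ j *\<^sub>R Ymat (int j) X)
     = (mat 1 + t *\<^sub>R X) ** (\<Sum>j<m. t ^ j *\<^sub>R Ymat (int j) X) + (mat 1 + t *\<^sub>R X) ** (t ^ m *\<^sub>R Ymat (int m) X)"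
    by (simp add: matrix_add_ldistrib)
  also have "\<dots> = (\<Sum>j<m. t ^ j * esym (int j) X) *\<^sub>R mat 1 + t ^ m *\<^sub>R (X ** Ymat (int m - 1) X)
        + (t ^ m *\<^sub>R Ymat (int m) X + t ^ Suc m *\<^sub>R (X ** Ymat (int m) X))"
    unfolding Suc.IH by (simp add: mm_simps scaleR_add_right)
  also have "\<dots> = (\<Sum>j<Suc m. t ^ j * esym (int j) X) *\<^sub>R mat 1 + t ^ Suc m *\<^sub>R (X ** Ymat (int (Suc m) - 1) X)"
    by (simp add: r algebra_simps scaleR_add_left)
  finally show ?case .
qed

lemma gen_identity:
  fixes X :: "real^'n^('n::finite)"
  shows "(mat 1 + t *\<^sub>R X) ** (\<Sum>j<CARD('n). t ^ j *\<^sub>R Ymat (int j) X)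
      = det (mat 1 + t *\<^sub>R X) *\<^sub>R mat 1 - t ^ CARD('n) *\<^sub>R Ymat (int CARD('n)) X"
proof -
  let ?n = "CARD('n)"
  have r: "Ymat (int ?n) X = esym (int ?n) X *\<^sub>R mat 1 - X ** Ymat (int ?n - 1) X"
    using Ymat_rec[of "int ?n" X] by simp
  have "det (mat 1 + t *\<^sub>R X) = (\<Sum>j<?n. t ^ j * esym (int j) X) + t ^ ?n * esym (int ?n) X"
    using cp_sum[of X t] poly_cp[of X t] by (simp add: lessThan_Suc_atMost[symmetric] mult.commute)
  thus ?thesis unfolding telescope r by (simp add: algebra_simps scaleR_add_left)
qed

lemma poly_infinite_zero:
  fixes p :: "real poly"
  assumes "infinite {t. poly p t = 0}"
  shows "p = 0"
  using assms poly_roots_finite by blast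

lemma cp_nonzero: "cp X \<noteq> 0"
proof
  assume "cp X = 0"
  hence "poly (cp X) 0 = 0" by simp
  thus False by (simp add: poly_cp)
qed

lemma good_infinite: "infinite {t::real. det (mat 1 + t *\<^sub>R (X::real^'n^('n::finite))) \<noteq> 0 \<and> P t}"
  if "infinite {t. P t}"
proof
  assume fin: "finite {t. det (mat 1 + t *\<^sub>R X) \<noteq> 0 \<and> P t}"
  have "finite {t. poly (cp X) t = 0}" using poly_roots_finite cp_nonzero by blast
  hence "finite ({t. det (mat 1 + t *\<^sub>R X) \<noteq> 0 \<and> P t} \<union> {t. poly (cp X) t = 0})" using fin by simp
  moreover have "{t. P t} \<subseteq> {t. det (mat 1 + t *\<^sub>R X) \<noteq> 0 \<and> P t} \<union> {t. poly (cp X) t = 0}"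
    by (auto simp: poly_cp)
  ultimately show False using that finite_subset by blast
qed

lemma pCons0_sum: "pCons 0 (sum f S) = (\<Sum>l\<in>S. pCons 0 (f l :: real poly))"
  by (induction S rule: infinite_finite_induct) (auto, metis add_pCons add_0)

theorem cayley_hamilton: "Ymat (int CARD('n)) (X::real^'n^('n::finite)) = 0"
proof -
  let ?n = "CARD('n)"
  define r where "r i j = adjp X $ i $ j - (\<Sum>l<?n. monom (Ymat (int l) X $ i $ j) l)" for i j
  have degr: "degree (r i j) \<le> ?n - 1" for i j
    unfolding r_def
  proof (rule order.trans[OF degree_diff_le_max], rule max.boundedI)
    show "degree (adjp X $ i $ j) \<le> ?n - 1" by (rule degree_adjp)
    show "degree (\<Sum>l<?n. monom (Ymat (int l) X $ i $ j) l) \<le> ?n - 1"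
      by (rule degree_sum_le) (auto intro: order.trans[OF degree_monom_le])
  qed
  define p where "p i j = (\<Sum>l\<in>UNIV. [:if i = l then 1 else 0, X$i$l:] * r l j) - monom (Ymat (int ?n) X $ i $ j) ?n" for i j
  have peval: "poly (p i j) t = 0" if t: "det (mat 1 + t *\<^sub>R X) \<noteq> 0" for i j t
  proof -
    let ?A = "mat 1 + t *\<^sub>R X"
    have adjeq: "(\<Sum>k\<in>UNIV. ?A$i$k * poly (adjp X $ k $ j) t) = det ?A * (if i = j then 1 else 0)"
      unfolding poly_adjp by (rule adj_identity[OF t])
    have ge: "(?A ** (\<Sum>j<?n. t ^ j *\<^sub>R Ymat (int j) X)) $ i $ j
       = det ?A * (if i = j then 1 else 0) - t ^ ?n * Ymat (int ?n) X $ i $ j"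
      unfolding gen_identity by (simp add: mat_def)
    have "poly (p i j) t = (\<Sum>l\<in>UNIV. ?A$i$l * poly (r l j) t) - t ^ ?n * Ymat (int ?n) X $ i $ j"
      unfolding p_def by (simp add: poly_sum poly_monom mat_def algebra_simps)
    also have "(\<Sum>l\<in>UNIV. ?A$i$l * poly (r l j) t)
       = (\<Sum>l\<in>UNIV. ?A$i$l * poly (adjp X $ l $ j) t) - (?A ** (\<Sum>j<?n. t ^ j *\<^sub>R Ymat (int j) X)) $ i $ j"
      unfolding r_def by (simp add: poly_sum poly_monom matrix_matrix_mult_def sum_subtractf
          algebra_simps sum_distrib_left sum_component)
    finally show ?thesis unfolding adjeq ge by simp
  qed
  have p0: "p i j = 0" for i j
  proof (rule poly_infinite_zero)
    have "infinite {t::real. det (mat 1 + t *\<^sub>R X) \<noteq> 0 \<and> True}"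
      by (rule good_infinite) (simp add: infinite_UNIV_char_0)
    thus "infinite {t. poly (p i j) t = 0}"
      by (rule infinite_super[rotated]) (auto intro: peval)
  qed
  have coeffp: "coeff (p i j) k = coeff (r i j) k + (if k = 0 then 0 else (\<Sum>l\<in>UNIV. X$i$l * coeff (r l j) (k - 1)))
       - (if k = ?n then Ymat (int ?n) X $ i $ j else 0)" for i j k
  proof -
    have m: "[:if i = l then 1 else 0, X$i$l:] * r l j = (if i = l then r l j else 0) + pCons 0 (smult (X$i$l) (r l j))" for l
      by (simp add: mult_pCons_left)
    have s: "(\<Sum>l\<in>UNIV. [:if i = l then 1 else 0, X$i$l:] * r l j) = r i j + pCons 0 (\<Sum>l\<in>UNIV. smult (X$i$l) (r l j))"
      unfolding m sum.distrib by (simp add: sum.delta pCons0_sum)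
    show ?thesis unfolding p_def s
      by (cases k) (simp_all add: coeff_sum coeff_monom)
  qed
  have rz: "\<forall>i j. coeff (r i j) k = 0" if "k < ?n" for k
    using that
  proof (induction k)
    case 0
    have "?n \<noteq> 0" by simp
    thus ?case using coeffp[of _ _ 0] p0 by simp
  next
    case (Suc k)
    show ?case
    proof (intro allI)
      fix i j
      have "coeff (p i j) (Suc k) = 0" by (simp add: p0)
      thus "coeff (r i j) (Suc k) = 0" using coeffp[of i j "Suc k"] Suc by simp
    qed
  qed
  have "Ymat (int ?n) X $ i $ j = 0" for i j
  proof -
    have n1: "?n = Suc (?n - 1)" by simp
    have "0 < ?n" by simp
    hence "degree (r i j) < ?n" using degr[of i j] by linarith
    hence "coeff (r i j) ?n = 0" by (simp add: coeff_eq_0)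
    moreover have "\<forall>l. coeff (r l j) (?n - 1) = 0" using rz[of "?n - 1"] by simp
    ultimately show ?thesis using coeffp[of i j ?n] p0[of i j] by simp
  qed
  thus ?thesis by (simp add: vec_eq_iff)
qed


lemma inv_eq:
  fixes A B :: "real^'n^('n::finite)"
  assumes "A ** B = mat 1"
  shows "matrix_inv A = B"
proof -
  have BA: "B ** A = mat 1" using assms matrix_left_right_inverse by blast
  have ex: "\<exists>A'. A ** A' = mat 1 \<and> A' ** A = mat 1" using assms BA by blast
  have "A ** matrix_inv A = mat 1 \<and> matrix_inv A ** A = mat 1"
    unfolding matrix_inv_def by (rule someI_ex[OF ex])
  hence "matrix_inv A = (B ** A) ** matrix_inv A" using BA by simp
  also have "\<dots> = B" using \<open>A ** matrix_inv A = mat 1 \<and> _\<close> by (simp add: matrix_mul_assoc[symmetric])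
  finally show ?thesis .
qed

lemma inv_right: "invertible (A::real^'n^('n::finite)) \<Longrightarrow> A ** matrix_inv A = mat 1"
  unfolding invertible_def matrix_inv_def by (rule conjunct1[OF someI_ex]) blast

lemma inv_left: "invertible (A::real^'n^('n::finite)) \<Longrightarrow> matrix_inv A ** A = mat 1"
  unfolding invertible_def matrix_inv_def by (rule conjunct2[OF someI_ex]) blast

lemma invertibleI: "(A::real^'n^('n::finite)) ** B = mat 1 \<Longrightarrow> invertible A"
  using invertible_right_inverse by blast

lemma inv_invertible: "invertible (A::real^'n^('n::finite)) \<Longrightarrow> invertible (matrix_inv A)"
  using inv_left invertibleI by blast

lemma inv_inv: "invertible (A::real^'n^('n::finite)) \<Longrightarrow> matrix_inv (matrix_inv A) = A"
  using inv_left inv_eq by blast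

lemma inv_mult: "invertible (A::real^'n^('n::finite)) \<Longrightarrow> invertible (B::real^'n^'n) \<Longrightarrow> matrix_inv (A ** B) = matrix_inv B ** matrix_inv A"
  by (rule inv_eq) (metis inv_right matrix_mul_assoc matrix_mul_rid)

lemma det_inv: "invertible (A::real^'n^('n::finite)) \<Longrightarrow> det (matrix_inv A) = 1 / det A"
  using det_mul[of A "matrix_inv A"] inv_right[of A] invertible_det_nz[of A]
  by (simp add: field_simps)

lemma inv_transpose: "invertible (A::real^'n^('n::finite)) \<Longrightarrow> matrix_inv (transpose A) = transpose (matrix_inv A)"
  by (rule inv_eq) (metis inv_left matrix_transpose_mul transpose_mat)

lemma det_scaleR: "det (c *\<^sub>R (A::real^'n^('n::finite))) = c ^ CARD('n) * det A"
proof -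
  have "c *\<^sub>R A = mat c ** A" by (simp add: mat_mm)
  thus ?thesis by (simp add: det_mul det_diagonal mat_def)
qed

lemma Ymat_big: "int CARD('n) \<le> k \<Longrightarrow> Ymat k (X::real^'n^('n::finite)) = 0"
proof -
  assume "int CARD('n) \<le> k"
  then obtain m where m: "k = int CARD('n) + int m" by (metis zle_iff_zadd)
  show "Ymat k X = 0" unfolding m
  proof (induction m)
    case 0 thus ?case using cayley_hamilton by simp
  next
    case (Suc m)
    have "Ymat (int CARD('n) + int (Suc m)) X = esym (int CARD('n) + int (Suc m)) X *\<^sub>R mat 1
          - X ** Ymat (int CARD('n) + int (Suc m) - 1) X"
      by (rule Ymat_rec) simp
    also have "int CARD('n) + int (Suc m) - 1 = int CARD('n) + int m" by simp
    finally show ?case using Suc.IH by (simp add: esym_big)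
  qed
qed

lemma gen_inverse:
  fixes X :: "real^'n^('n::finite)"
  shows "(mat 1 + t *\<^sub>R X) ** (\<Sum>j<CARD('n). t ^ j *\<^sub>R Ymat (int j) X) = det (mat 1 + t *\<^sub>R X) *\<^sub>R mat 1"
  using gen_identity[of t X] cayley_hamilton[of X] by simp

lemma cp_eqI: "(\<And>t. det (mat 1 + t *\<^sub>R X) = det (mat 1 + t *\<^sub>R Y)) \<Longrightarrow> cp X = cp (Y::real^'n^('n::finite))"
proof -
  assume h: "\<And>t. det (mat 1 + t *\<^sub>R X) = det (mat 1 + t *\<^sub>R Y)"
  have "poly (cp X) = poly (cp Y)" by (rule ext) (simp add: poly_cp h)
  thus ?thesis by (simp add: poly_eq_poly_eq_iff)
qed

lemma esym_eqI: "(\<And>t. det (mat 1 + t *\<^sub>R X) = det (mat 1 + t *\<^sub>R Y)) \<Longrightarrow> esym k X = esym k (Y::real^'n^('n::finite))"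
  unfolding esym_cp by (subst cp_eqI[of X Y]) simp_all

lemma esym_sim:
  fixes T X :: "real^'n^('n::finite)"
  assumes "invertible T"
  shows "esym k (T ** X ** matrix_inv T) = esym k X"
proof (rule esym_eqI)
  fix t
  have "mat 1 + t *\<^sub>R (T ** X ** matrix_inv T) = T ** (mat 1 + t *\<^sub>R X) ** matrix_inv T"
  proof -
    have "T ** (mat 1 + t *\<^sub>R X) ** matrix_inv T = T ** matrix_inv T + t *\<^sub>R (T ** X ** matrix_inv T)"
      by (simp only: matrix_add_ldistrib mm_radd mm_rscale mm_lscale matrix_mul_rid)
    thus ?thesis using inv_right[OF assms] by simp
  qed
  hence "det (mat 1 + t *\<^sub>R (T ** X ** matrix_inv T)) = det T * det (mat 1 + t *\<^sub>R X) * det (matrix_inv T)"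
    by (simp add: det_mul)
  thus "det (mat 1 + t *\<^sub>R (T ** X ** matrix_inv T)) = det (mat 1 + t *\<^sub>R X)"
    using det_inv[OF assms] invertible_det_nz[of T] assms by simp
qed

lemma mpow_sim:
  fixes T X :: "real^'n^('n::finite)"
  assumes "invertible T"
  shows "mpow (T ** X ** matrix_inv T) n = T ** mpow X n ** matrix_inv T"
proof (induction n)
  case 0 thus ?case using inv_right[OF assms] by simp
next
  case (Suc n)
  have "T ** X ** matrix_inv T ** (T ** mpow X n ** matrix_inv T) = T ** X ** (matrix_inv T ** T) ** mpow X n ** matrix_inv T"
    by (simp add: matrix_mul_assoc)
  thus ?case using Suc inv_left[OF assms] by (simp add: matrix_mul_assoc)
qed

lemma Ymat_sim:
  fixes T X :: "real^'n^('n::finite)"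
  assumes "invertible T"
  shows "Ymat k (T ** X ** matrix_inv T) = T ** Ymat k X ** matrix_inv T"
  unfolding Ymat_def mm_rsum mm_lsum esym_sim[OF assms] mpow_sim[OF assms]
  by (simp add: mm_simps)

lemma esym_transpose: "esym k (transpose X) = esym k (X::real^'n^('n::finite))"
proof (rule esym_eqI)
  fix t
  have "mat 1 + t *\<^sub>R transpose X = transpose (mat 1 + t *\<^sub>R X)"
    by (simp add: transpose_def vec_eq_iff mat_def)
  thus "det (mat 1 + t *\<^sub>R transpose X) = det (mat 1 + t *\<^sub>R X)" by simp
qed

lemma transpose_add: "transpose (A + B) = transpose A + transpose (B::real^'n^'m)"
  by (simp add: transpose_def vec_eq_iff)
lemma transpose_diff: "transpose (A - B) = transpose A - transpose (B::real^'n^'m)"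
  by (simp add: transpose_def vec_eq_iff)
lemma transpose_sum: "transpose (sum f S) = (\<Sum>i\<in>S. transpose (f i :: real^'n^'m))"
  by (induction S rule: infinite_finite_induct) (auto simp: transpose_add transpose_def vec_eq_iff)

lemma mpow_transpose: "mpow (transpose X) n = transpose (mpow (X::real^'n^('n::finite)) n)"
  by (induction n) (simp_all add: matrix_transpose_mul mpow_comm)

lemma Ymat_transpose: "Ymat k (transpose X) = transpose (Ymat k (X::real^'n^('n::finite)))"
  unfolding Ymat_def transpose_sum by (simp add: esym_transpose mpow_transpose transpose_scalar)


definition blk :: "real \<Rightarrow> real^'s \<Rightarrow> real^'s \<Rightarrow> real^'s^'s \<Rightarrow> real^('s::finite option)^('s option)" where
  "blk a r c A = (\<chi> p q. case p of None \<Rightarrow> (case q of None \<Rightarrow> a | Some j \<Rightarrow> r$j)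
                     | Some i \<Rightarrow> (case q of None \<Rightarrow> c$i | Some j \<Rightarrow> A$i$j))"

lemma blk_nth[simp]:
  "blk a r c A $ None $ None = a" "blk a r c A $ None $ Some j = r$j"
  "blk a r c A $ Some i $ None = c$i" "blk a r c A $ Some i $ Some j = A$i$j"
  by (simp_all add: blk_def)

lemma UNIV_option_split: "(UNIV :: 'a option set) = insert None (Some ` UNIV)"
  by (auto, metis not_Some_eq rangeI)

lemma sum_option: "(\<Sum>q\<in>(UNIV::'a::finite option set). f q) = f None + (\<Sum>i\<in>UNIV. f (Some i))"
  unfolding UNIV_option_split by (simp add: sum.reindex)

lemma prod_option: "(\<Prod>q\<in>(UNIV::'a::finite option set). f q) = f None * (\<Prod>i\<in>UNIV. f (Some i))"
  unfolding UNIV_option_split by (simp add: prod.reindex)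

lemma blk_eq_iff: "blk a r c A = blk a' r' c' A' \<longleftrightarrow> a = a' \<and> r = r' \<and> c = c' \<and> A = A'"
proof
  assume h: "blk a r c A = blk a' r' c' A'"
  have "blk a r c A $ p $ q = blk a' r' c' A' $ p $ q" for p q using h by simp
  thus "a = a' \<and> r = r' \<and> c = c' \<and> A = A'"
    by (simp add: vec_eq_iff) (metis blk_nth)
qed simp

lemma blk_cases: "\<exists>a r c A. (M::real^('s::finite option)^('s option)) = blk a r c A"
proof (intro exI)
  show "M = blk (M$None$None) (\<chi> j. M$None$Some j) (\<chi> i. M$Some i$None) (\<chi> i j. M$Some i$Some j)"
    by (simp add: vec_eq_iff blk_def split: option.split)
qed

lemma blk_mult: "blk a r c A ** blk a' r' c' A' =
   blk (a * a' + r \<bullet> c') (a *\<^sub>R r' + transpose A' *v r) (a' *\<^sub>R c + A *v c') (outer c r' + A ** A')"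
  by (simp add: vec_eq_iff blk_def matrix_matrix_mult_def sum_option inner_vec_def outer_def
      matrix_vector_mult_def transpose_def split: option.split) (simp add: algebra_simps)

lemma blk_add: "blk a r c A + blk a' r' c' A' = blk (a + a') (r + r') (c + c') (A + A')"
  by (simp add: vec_eq_iff blk_def split: option.split)
lemma blk_diff: "blk a r c A - blk a' r' c' A' = blk (a - a') (r - r') (c - c') (A - A')"
  by (simp add: vec_eq_iff blk_def split: option.split)
lemma blk_neg: "- blk a r c A = blk (- a) (- r) (- c) (- A)"
  by (simp add: vec_eq_iff blk_def split: option.split)
lemma blk_scaleR: "x *\<^sub>R blk a r c A = blk (x * a) (x *\<^sub>R r) (x *\<^sub>R c) (x *\<^sub>R A)"
  by (simp add: vec_eq_iff blk_def split: option.split)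
lemma blk_mat: "(mat x :: real^('s::finite option)^('s option)) = blk x 0 0 (mat x)"
  by (simp add: vec_eq_iff blk_def mat_def split: option.split)
lemma blk_zero: "(0 :: real^('s::finite option)^('s option)) = blk 0 0 0 0"
  by (simp add: vec_eq_iff blk_def split: option.split)
lemma blk_transpose: "transpose (blk a r c A) = blk a c r (transpose A)"
  by (simp add: vec_eq_iff blk_def transpose_def split: option.split)

definition vecb :: "real \<Rightarrow> real^'s \<Rightarrow> real^('s::finite option)" where
  "vecb x0 x = (\<chi> p. case p of None \<Rightarrow> x0 | Some i \<Rightarrow> x$i)"

lemma vecb_nth[simp]: "vecb x0 x $ None = x0" "vecb x0 x $ Some i = x$i"
  by (simp_all add: vecb_def)

lemma blk_mv: "blk a r c A *v vecb x0 x = vecb (a * x0 + r \<bullet> x) (x0 *\<^sub>R c + A *v x)"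
  by (simp add: vec_eq_iff vecb_def matrix_vector_mult_def sum_option inner_vec_def split: option.split)

lemma vecb_inner: "vecb a x \<bullet> vecb b y = a * b + x \<bullet> y"
  by (simp add: inner_vec_def sum_option)

definition mopt :: "('s \<Rightarrow> 's) \<Rightarrow> 's option \<Rightarrow> 's option" where
  "mopt \<sigma> x = (case x of None \<Rightarrow> None | Some i \<Rightarrow> Some (\<sigma> i))"

lemma mopt_map_permutation: "mopt \<sigma> = map_permutation UNIV Some \<sigma>"
  by (auto simp: fun_eq_iff mopt_def map_permutation_def restrict_id_def split: option.split)

lemma sign_mopt: "\<sigma> permutes (UNIV::'s::finite set) \<Longrightarrow> sign (mopt \<sigma>) = sign \<sigma>"
  unfolding mopt_map_permutation by (rule sign_map_permutation) auto

lemma det_blk_lower: "det (blk a 0 c A) = a * det (A::real^'s^('s::finite))"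
proof -
  let ?M = "blk a 0 c A"
  let ?t = "\<lambda>p. of_int (sign p) * (\<Prod>q\<in>UNIV. ?M $ q $ p q)"
  let ?P = "{p. p permutes (UNIV::'s option set)}"
  let ?T = "{p. p permutes (UNIV::'s option set) \<and> p None = None}"
  have "det ?M = sum ?t ?P" by (simp add: det_def)
  also have "\<dots> = sum ?t ?T"
  proof (rule sum.mono_neutral_right)
    show "finite ?P" by (simp add: finite_permutations)
    show "?T \<subseteq> ?P" by auto
    show "\<forall>p\<in>?P - ?T. ?t p = 0"
    proof
      fix p assume "p \<in> ?P - ?T"
      then obtain j where j: "p None = Some j" by auto
      have "?M $ None $ p None = 0" using j by simp
      hence "(\<Prod>q\<in>UNIV. ?M $ q $ p q) = 0" by (metis UNIV_I finite prod_zero)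
      thus "?t p = 0" by simp
    qed
  qed
  also have "\<dots> = sum (?t \<circ> mopt) {\<sigma>. \<sigma> permutes (UNIV::'s set)}"
  proof (rule sum.reindex_bij_witness[where j=mopt and i="\<lambda>p i. the (p (Some i))", symmetric])
    fix \<sigma> assume s: "\<sigma> \<in> {\<sigma>. \<sigma> permutes (UNIV::'s set)}"
    show "(\<lambda>i. the (mopt \<sigma> (Some i))) = \<sigma>" by (simp add: mopt_def)
    show "mopt \<sigma> \<in> ?T"
    proof -
      have "map_permutation UNIV Some \<sigma> permutes range Some"
        by (rule map_permutation_permutes) (use s in \<open>auto simp: bij_betw_def\<close>)
      hence "mopt \<sigma> permutes UNIV"
        unfolding mopt_map_permutation by (rule permutes_subset) simp
      thus ?thesis by (simp add: mopt_def)
    qed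
    show "?t (mopt \<sigma>) = (?t \<circ> mopt) \<sigma>" by simp
  next
    fix p assume p: "p \<in> ?T"
    hence pp: "p permutes UNIV" and pN: "p None = None" by auto
    have pS: "p (Some i) \<noteq> None" for i
    proof
      assume "p (Some i) = None"
      hence "p (Some i) = p None" using pN by simp
      hence "Some i = None" using permutes_inj[OF pp] by (simp add: inj_eq)
      thus False by simp
    qed
    show "mopt (\<lambda>i. the (p (Some i))) = p"
      using pN pS by (auto simp: fun_eq_iff mopt_def split: option.split)
    have inj: "inj (\<lambda>i. the (p (Some i)))"
    proof (rule injI)
      fix x y assume "the (p (Some x)) = the (p (Some y))"
      hence "p (Some x) = p (Some y)" using pS[of x] pS[of y] by (auto simp: option.expand)
      hence "Some x = Some y" using permutes_inj[OF pp] by (simp add: inj_eq)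
      thus "x = y" by simp
    qed
    hence "bij (\<lambda>i. the (p (Some i)))" by (simp add: finite_UNIV_inj_surj bij_def)
    thus "(\<lambda>i. the (p (Some i))) \<in> {\<sigma>. \<sigma> permutes UNIV}" using bij_imp_permutes[of _ UNIV] by simp
  qed
  also have "\<dots> = (\<Sum>\<sigma>\<in>{\<sigma>. \<sigma> permutes (UNIV::'s set)}. a * (of_int (sign \<sigma>) * (\<Prod>i\<in>UNIV. A $ i $ \<sigma> i)))"
    by (rule sum.cong) (auto simp: sign_mopt prod_option mopt_def)
  also have "\<dots> = a * det A" by (simp add: det_def sum_distrib_left)
  finally show ?thesis .
qed

lemma det_blk_upper: "det (blk a r 0 A) = a * det (A::real^'s^('s::finite))"
  using det_blk_lower[of a r "transpose A"] det_transpose[of "blk a r 0 A"]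
  by (simp add: blk_transpose)

lemma outer_zero[simp]: "outer 0 w = 0" "outer u 0 = 0"
  by (simp_all add: outer_def vec_eq_iff)

lemma outer_mv: "outer u w *v x = (w \<bullet> x) *\<^sub>R u"
  by (simp add: outer_def vec_eq_iff matrix_vector_mult_def inner_vec_def sum_distrib_left algebra_simps)

lemma det_rank_one: "det (mat 1 - outer x y) = 1 - y \<bullet> (x::real^'s::finite)"
proof -
  have f1: "blk 1 y x (mat 1) = blk 1 y 0 (mat 1) ** blk (1 - y \<bullet> x) 0 x (mat 1)"
    by (simp add: blk_mult inner_commute)
  have f2: "blk 1 y x (mat 1) = blk 1 0 x (mat 1 - outer x y) ** blk 1 y 0 (mat 1)"
    by (simp add: blk_mult)
  have "det (blk 1 y x (mat 1)) = 1 - y \<bullet> x"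
    unfolding f1 det_mul det_blk_upper det_blk_lower by simp
  moreover have "det (blk 1 y x (mat 1)) = det (mat 1 - outer x y)"
    unfolding f2 det_mul det_blk_upper det_blk_lower by simp
  ultimately show ?thesis by simp
qed


lemma mv_sum: "(sum f S :: real^'n^'m) *v x = (\<Sum>j\<in>S. f j *v x)"
  by (induction S rule: infinite_finite_induct) (auto simp: matrix_vector_mult_add_rdistrib)

lemma mv_scaleR: "(c *\<^sub>R (A::real^'n^'m)) *v x = c *\<^sub>R (A *v x)"
  by (simp add: vec_eq_iff matrix_vector_mult_def sum_distrib_left algebra_simps)

lemma mm_outer: "(A::real^'n^('n::finite)) ** outer u w = outer (A *v u) w"
  by (simp add: outer_def vec_eq_iff matrix_matrix_mult_def matrix_vector_mult_def sum_distrib_right sum_distrib_left mult_ac)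

lemma outer_mm: "outer u w ** (A::real^'n^('n::finite)) = outer u (transpose A *v w)"
  by (simp add: outer_def vec_eq_iff matrix_matrix_mult_def matrix_vector_mult_def transpose_def sum_distrib_left algebra_simps)

lemma outer_scaleR: "outer (c *\<^sub>R u) w = c *\<^sub>R outer u w" "outer u (c *\<^sub>R w) = c *\<^sub>R outer u w"
  by (simp_all add: outer_def vec_eq_iff)

lemma det_rank_one_gen:
  fixes A :: "real^'n^('n::finite)"
  assumes "invertible A"
  shows "det (A - outer u w) = det A * (1 - w \<bullet> (matrix_inv A *v u))"
proof -
  have "A - outer u w = A ** (mat 1 - outer (matrix_inv A *v u) w)"
    by (simp add: mm_simps mm_outer matrix_vector_mul_assoc inv_right[OF assms])
  thus ?thesis by (simp add: det_mul det_rank_one)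
qed

lemma coeff_shift_sum: "coeff (\<Sum>j<n. monom (c j) (Suc j)) k = (if 1 \<le> k \<and> k - 1 < n then c (k - 1) else (0::real))"
proof -
  have "coeff (\<Sum>j<n. monom (c j) (Suc j)) k = (\<Sum>j<n. if Suc j = k then c j else 0)"
    by (simp add: coeff_sum coeff_monom)
  also have "\<dots> = (if 1 \<le> k \<and> k - 1 < n then c (k - 1) else 0)"
  proof (cases k)
    case 0 thus ?thesis by simp
  next
    case (Suc m) thus ?thesis by (simp add: sum.delta')
  qed
  finally show ?thesis .
qed

theorem esym_rank1:
  fixes X :: "real^'n^('n::finite)"
  shows "esym k (X - outer x y) = esym k X - y \<bullet> (Ymat (k - 1) X *v x)"
proof -
  let ?n = "CARD('n)"
  define c where "c j = y \<bullet> (Ymat (int j) X *v x)" for j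
  define p2 where "p2 = cp X - (\<Sum>j<?n. monom (c j) (Suc j))"
  have ev: "poly (cp (X - outer x y)) t = poly p2 t" if t: "det (mat 1 + t *\<^sub>R X) \<noteq> 0" for t
  proof -
    let ?A = "mat 1 + t *\<^sub>R X"
    let ?Q = "\<Sum>j<?n. t ^ j *\<^sub>R Ymat (int j) X"
    have invA: "invertible ?A" using t invertible_det_nz by blast
    have "?A ** ?Q = det ?A *\<^sub>R mat 1" by (rule gen_inverse)
    hence "?A ** ((1 / det ?A) *\<^sub>R ?Q) = mat 1" using t by (simp add: mm_simps)
    hence Ai: "matrix_inv ?A = (1 / det ?A) *\<^sub>R ?Q" by (rule inv_eq)
    have eq: "mat 1 + t *\<^sub>R (X - outer x y) = ?A - outer (t *\<^sub>R x) y"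
      by (simp add: algebra_simps outer_scaleR)
    have "poly (cp (X - outer x y)) t = det (?A - outer (t *\<^sub>R x) y)"
      unfolding poly_cp eq ..
    also have "\<dots> = det ?A * (1 - y \<bullet> (matrix_inv ?A *v (t *\<^sub>R x)))"
      by (rule det_rank_one_gen[OF invA])
    also have "\<dots> = det ?A - t * (y \<bullet> (?Q *v x))"
      using t by (simp add: Ai mv_scaleR matrix_vector_mult_scaleR algebra_simps)
    also have "y \<bullet> (?Q *v x) = (\<Sum>j<?n. t ^ j * c j)"
      by (simp add: mv_sum mv_scaleR inner_sum_right c_def)
    also have "det ?A - t * (\<Sum>j<?n. t ^ j * c j) = poly p2 t"
      by (simp add: p2_def poly_cp poly_sum poly_monom sum_distrib_left algebra_simps)
    finally show ?thesis .
  qed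
  have "cp (X - outer x y) = p2"
  proof -
    have "infinite {t::real. det (mat 1 + t *\<^sub>R X) \<noteq> 0 \<and> True}"
      by (rule good_infinite) (simp add: infinite_UNIV_char_0)
    hence "infinite {t. poly (cp (X - outer x y) - p2) t = 0}"
      by (rule infinite_super[rotated]) (auto simp: ev)
    thus ?thesis using poly_infinite_zero by fastforce
  qed
  show ?thesis
  proof (cases "k < 0")
    case True thus ?thesis by (simp add: Ymat_neg)
  next
    case False
    then obtain m where m: "k = int m" by (metis nonneg_eq_int not_less)
    show ?thesis
    proof (cases "1 \<le> m \<and> m - 1 < ?n")
      case True
      hence "k - 1 = int (m - 1)" using m by simp
      thus ?thesis using True
        by (simp add: esym_cp m \<open>cp (X - outer x y) = p2\<close> p2_def coeff_shift_sum c_def)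
    next
      case False
      have "Ymat (k - 1) X = 0"
      proof (cases "m = 0")
        case True thus ?thesis by (simp add: m Ymat_neg)
      next
        case False
        hence "int ?n \<le> k - 1" using \<open>\<not> (1 \<le> m \<and> m - 1 < ?n)\<close> m by simp
        thus ?thesis by (rule Ymat_big)
      qed
      thus ?thesis using False
        by (simp add: esym_cp m \<open>cp (X - outer x y) = p2\<close> p2_def coeff_shift_sum del: One_nat_def) blast
    qed
  qed
qed

theorem Ymat_rank1:
  fixes X :: "real^'n^('n::finite)"
  shows "Ymat k (X - outer x y) *v x = Ymat k X *v x"
proof (cases "k < 0")
  case True thus ?thesis by (simp add: Ymat_neg)
next
  case False
  then obtain m where m: "k = int m" by (metis nonneg_eq_int not_less)
  show ?thesis unfolding m
  proof (induction m)
    case 0 thus ?case by (simp add: Ymat_0)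
  next
    case (Suc m)
    let ?X' = "X - outer x y"
    have r1: "Ymat (int (Suc m)) ?X' = esym (int (Suc m)) ?X' *\<^sub>R mat 1 - ?X' ** Ymat (int m) ?X'"
      using Ymat_rec[of "int (Suc m)" ?X'] by simp
    have r2: "Ymat (int (Suc m)) X = esym (int (Suc m)) X *\<^sub>R mat 1 - X ** Ymat (int m) X"
      using Ymat_rec[of "int (Suc m)" X] by simp
    have "Ymat (int (Suc m)) ?X' *v x = esym (int (Suc m)) ?X' *\<^sub>R x - ?X' *v (Ymat (int m) ?X' *v x)"
      unfolding r1 by (simp add: matrix_vector_mult_diff_rdistrib mv_scaleR matrix_vector_mul_assoc)
    also have "\<dots> = esym (int (Suc m)) ?X' *\<^sub>R x - ?X' *v (Ymat (int m) X *v x)"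
      using Suc.IH by simp
    also have "\<dots> = esym (int (Suc m)) X *\<^sub>R x - X *v (Ymat (int m) X *v x)"
      by (simp add: esym_rank1 matrix_vector_mult_diff_rdistrib outer_mv algebra_simps)
    also have "\<dots> = Ymat (int (Suc m)) X *v x"
      unfolding r2 by (simp add: matrix_vector_mult_diff_rdistrib mv_scaleR matrix_vector_mul_assoc)
    finally show ?case .
  qed
qed


theorem esym_inv:
  fixes X :: "real^'n^('n::finite)"
  assumes X: "invertible X"
  shows "esym k (matrix_inv X) = esym (int CARD('n) - k) X / det X"
proof -
  let ?n = "CARD('n)"
  have dX: "det X \<noteq> 0" using X invertible_det_nz by blast
  define p2 where "p2 = smult (1 / det X) (\<Sum>j\<le>?n. monom (esym (int j) X) (?n - j))"
  have ev: "poly (cp (matrix_inv X)) t = poly p2 t" if t: "t \<noteq> 0" for t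
  proof -
    have "mat 1 + t *\<^sub>R matrix_inv X = matrix_inv X ** (t *\<^sub>R (mat 1 + (1/t) *\<^sub>R X))"
    proof -
      have "matrix_inv X ** (t *\<^sub>R (mat 1 + (1/t) *\<^sub>R X)) = t *\<^sub>R matrix_inv X + (t * (1/t)) *\<^sub>R (matrix_inv X ** X)"
        by (simp only: mm_rscale matrix_add_ldistrib matrix_mul_rid scaleR_add_right scaleR_scaleR)
      thus ?thesis using t by (simp add: inv_left[OF X])
    qed
    hence "poly (cp (matrix_inv X)) t = (1 / det X) * (t ^ ?n * det (mat 1 + (1/t) *\<^sub>R X))"
      by (simp add: poly_cp det_mul det_inv[OF X] det_scaleR)
    also have "det (mat 1 + (1/t) *\<^sub>R X) = (\<Sum>j\<le>?n. esym (int j) X * (1/t) ^ j)"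
      using cp_sum[of X "1/t"] poly_cp[of X "1/t"] by simp
    also have "t ^ ?n * (\<Sum>j\<le>?n. esym (int j) X * (1/t) ^ j) = (\<Sum>j\<le>?n. esym (int j) X * t ^ (?n - j))"
      unfolding sum_distrib_left
    proof (rule sum.cong)
      fix j assume "j \<in> {..?n}"
      hence "t ^ ?n = t ^ (?n - j) * t ^ j" by (simp add: power_add[symmetric])
      thus "t ^ ?n * (esym (int j) X * (1 / t) ^ j) = esym (int j) X * t ^ (?n - j)"
        using t by (simp add: power_one_over field_simps)
    qed simp
    finally show ?thesis by (simp add: p2_def poly_sum poly_monom)
  qed
  have eqp: "cp (matrix_inv X) = p2"
  proof -
    have "infinite {t::real. t \<noteq> 0}"
    proof -
      have "{t::real. t \<noteq> 0} = UNIV - {0}" by auto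
      thus ?thesis by (simp add: infinite_UNIV_char_0)
    qed
    hence "infinite {t. poly (cp (matrix_inv X) - p2) t = 0}"
      by (rule infinite_super[rotated]) (auto simp: ev)
    thus ?thesis using poly_infinite_zero by fastforce
  qed
  show ?thesis
  proof (cases "k < 0")
    case True
    hence "int ?n < int ?n - k" by simp
    thus ?thesis using True by (simp add: esym_big)
  next
    case False
    then obtain m where m: "k = int m" by (metis nonneg_eq_int not_less)
    have c: "coeff p2 m = (1 / det X) * (\<Sum>j\<le>?n. if ?n - j = m then esym (int j) X else 0)"
      by (simp add: p2_def coeff_sum coeff_monom)
    show ?thesis
    proof (cases "m \<le> ?n")
      case True
      have "(\<Sum>j\<le>?n. if ?n - j = m then esym (int j) X else 0) = (\<Sum>j\<in>{?n - m}. esym (int j) X)"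
        by (rule sum.mono_neutral_cong_right) (use True in auto)
      thus ?thesis using True by (simp add: esym_cp m eqp c of_nat_diff)
    next
      case False
      have "(\<Sum>j\<le>?n. if ?n - j = m then esym (int j) X else 0) = 0"
        by (rule sum.neutral) (use False in auto)
      moreover have "esym (int ?n - int m) X = 0" using False by simp
      ultimately show ?thesis using False by (simp add: esym_cp m eqp c esym_big)
    qed
  qed
qed

theorem Ymat_inv:
  fixes X :: "real^'n^('n::finite)"
  assumes X: "invertible X"
  shows "Ymat (int CARD('n) - k) (matrix_inv X) = (1 / det X) *\<^sub>R (X ** Ymat (k - 1) X)"
proof -
  let ?n = "int CARD('n)"
  have dX: "det X \<noteq> 0" using X invertible_det_nz by blast
  have main: "Ymat (?n - (?n + 1 - int m)) (matrix_inv X) = (1 / det X) *\<^sub>R (X ** Ymat (?n + 1 - int m - 1) X)" for m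
  proof (induction m)
    case 0
    show ?case by (simp add: Ymat_neg Ymat_big)
  next
    case (Suc m)
    let ?k = "?n + 1 - int (Suc m)"
    show ?case
    proof (cases "?k < 0")
      case True
      have "?n \<le> ?n - ?k" using True by simp
      hence "Ymat (?n - ?k) (matrix_inv X) = 0" by (rule Ymat_big)
      moreover have "Ymat (?k - 1) X = 0" using True by (simp add: Ymat_neg)
      ultimately show ?thesis by simp
    next
      case False
      have k1: "?n + 1 - int m = ?k + 1" by simp
      have i1: "?n - (?k + 1) = ?n - ?k - 1" and i2: "?k + 1 - 1 = ?k" by simp_all
      have IH: "Ymat (?n - ?k - 1) (matrix_inv X) = (1 / det X) *\<^sub>R (X ** Ymat ?k X)"
        using Suc.IH unfolding k1 i1 i2 .
      have r1: "Ymat (?n - ?k) (matrix_inv X) = esym (?n - ?k) (matrix_inv X) *\<^sub>R mat 1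
              - matrix_inv X ** Ymat (?n - ?k - 1) (matrix_inv X)"
        by (rule Ymat_rec) simp
      have r2: "Ymat ?k X = esym ?k X *\<^sub>R mat 1 - X ** Ymat (?k - 1) X"
        by (rule Ymat_rec) (use False in simp)
      have i3: "?n - (?n - ?k) = ?k" by simp
      have "matrix_inv X ** ((1 / det X) *\<^sub>R (X ** Ymat ?k X)) = (1 / det X) *\<^sub>R ((matrix_inv X ** X) ** Ymat ?k X)"
        by (simp only: mm_rscale matrix_mul_assoc)
      hence i4: "matrix_inv X ** ((1 / det X) *\<^sub>R (X ** Ymat ?k X)) = (1 / det X) *\<^sub>R Ymat ?k X"
        by (simp add: inv_left[OF X])
      have "Ymat (?n - ?k) (matrix_inv X) = (esym ?k X / det X) *\<^sub>R mat 1 - (1 / det X) *\<^sub>R Ymat ?k X"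
        unfolding r1 IH esym_inv[OF X] i3 i4 ..
      also have "\<dots> = (1 / det X) *\<^sub>R (X ** Ymat (?k - 1) X)"
        unfolding r2 by (simp add: scaleR_diff_right divide_inverse)
      finally show ?thesis by simp
    qed
  qed
  show ?thesis
  proof (cases "k \<le> ?n + 1")
    case True
    have "k = ?n + 1 - int (nat (?n + 1 - k))" using True by simp
    thus ?thesis using main[of "nat (?n + 1 - k)"] by simp
  next
    case False
    have "?n - k < 0" using False by simp
    hence "Ymat (?n - k) (matrix_inv X) = 0" by (rule Ymat_neg)
    moreover have "?n \<le> k - 1" using False by simp
    hence "Ymat (k - 1) X = 0" by (rule Ymat_big)
    ultimately show ?thesis by simp
  qed
qed


lemma inner_mv_left: "((A::real^'n^('n::finite)) *v x) \<bullet> y = x \<bullet> (transpose A *v y)"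
  by (simp add: inner_vec_def matrix_vector_mult_def transpose_def sum_distrib_left sum_distrib_right
      mult_ac) (rule sum.swap)

lemma mv_neg: "(A::real^'n^'m) *v (- x) = - (A *v x)"
  by (simp add: vec_eq_iff matrix_vector_mult_def sum_negf)

lemma mv_negA: "(- (A::real^'n^'m)) *v x = - (A *v x)"
  by (simp add: vec_eq_iff matrix_vector_mult_def sum_negf)

lemma blk_scale_mat: "c *\<^sub>R (mat 1 :: real^('s::finite option)^('s option)) = blk c 0 0 (c *\<^sub>R mat 1)"
  by (simp add: blk_mat blk_scaleR)

lemma lower_esym: "esym k (blk 0 0 c A) = esym k (A::real^'s^('s::finite))"
proof (rule esym_eqI)
  fix t
  have "mat 1 + t *\<^sub>R blk 0 0 c A = blk 1 0 (t *\<^sub>R c) (mat 1 + t *\<^sub>R A)"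
    by (simp add: blk_mat blk_scaleR blk_add)
  thus "det (mat 1 + t *\<^sub>R blk 0 0 c A) = det (mat 1 + t *\<^sub>R A)"
    by (simp add: det_blk_lower)
qed

lemma lower_Ymat: "Ymat k (blk 0 0 c A) = blk (esym k A) 0 (- (Ymat (k - 1) A *v c)) (Ymat k (A::real^'s^('s::finite)))"
proof (cases "k < 0")
  case True thus ?thesis by (simp add: Ymat_neg blk_zero)
next
  case False
  then obtain m where m: "k = int m" by (metis nonneg_eq_int not_less)
  show ?thesis unfolding m
  proof (induction m)
    case 0 thus ?case by (simp add: Ymat_0 Ymat_neg blk_mat)
  next
    case (Suc m)
    have r1: "Ymat (int (Suc m)) (blk 0 0 c A) = esym (int (Suc m)) (blk 0 0 c A) *\<^sub>R mat 1 - blk 0 0 c A ** Ymat (int m) (blk 0 0 c A)"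
      using Ymat_rec[of "int (Suc m)" "blk 0 0 c A"] by simp
    have r2: "Ymat (int (Suc m)) A = esym (int (Suc m)) A *\<^sub>R mat 1 - A ** Ymat (int m) A"
      using Ymat_rec[of "int (Suc m)" A] by simp
    have r3: "esym (int m) A *\<^sub>R c - A *v (Ymat (int m - 1) A *v c) = Ymat (int m) A *v c"
      using Ymat_rec[of "int m" A] by (simp add: matrix_vector_mult_diff_rdistrib mv_scaleR matrix_vector_mul_assoc)
    show ?case
      unfolding r1 Suc.IH lower_esym blk_scale_mat blk_mult blk_diff r2
      using r3 by (simp add: algebra_simps mv_neg)
  qed
qed

lemma outer_vecb: "outer (vecb x0 x) (vecb y0 y) = blk (x0 * y0) (x0 *\<^sub>R y) (y0 *\<^sub>R x) (outer x (y::real^'s::finite))"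
  by (simp add: outer_def blk_def vec_eq_iff split: option.split)

lemma vecb_scaleR[simp]: "c *\<^sub>R vecb x0 x = vecb (c * x0) (c *\<^sub>R x)"
  by (simp add: vecb_def vec_eq_iff split: option.split)
lemma vecb_neg[simp]: "- vecb x0 x = vecb (- x0) (- x)"
  by (simp add: vecb_def vec_eq_iff split: option.split)

lemma u_corner: "vecb 1 0 \<bullet> ((M::real^('s::finite option)^('s option)) *v vecb 1 0) = M $ None $ None"
proof -
  obtain a r c A where "M = blk a r c A" using blk_cases by blast
  thus ?thesis by (simp add: blk_mv vecb_inner)
qed

lemma u_corner2: "vecb 1 0 \<bullet> ((M::real^('s::finite option)^('s option)) *v vecb x0 0) = x0 * M $ None $ None"
proof -
  obtain a r c A where "M = blk a r c A" using blk_cases by blast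
  thus ?thesis by (simp add: blk_mv vecb_inner)
qed

lemma outer_transpose: "transpose (outer x y) = outer y (x::real^'s::finite)"
  by (simp add: outer_def transpose_def vec_eq_iff)

lemma outer_neg: "outer (- x) (- y) = outer x (y::real^'s::finite)" "outer (- x) y = - outer x y" "outer x (- y) = - outer x y"
  by (simp_all add: outer_def vec_eq_iff)

lemma outer_mm_sym: "transpose P = P \<Longrightarrow> outer v v ** P = outer v (P *v v)"
  by (metis outer_mm)

lemma R3:
  fixes P :: "real^'s^('s::finite)"
  assumes Ps: "transpose P = P"
  shows "esym k (blk (a - v \<bullet> (P *v v)) (P *v v) (- (P *v v)) P)
       = esym k ((mat 1 - outer v v) ** P) + a * esym (k - 1) P"
proof -
  define w where "w = P *v v"
  define L0 where "L0 = blk (- (v \<bullet> w)) w (- w) P"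
  define Zi :: "real^('s option)^('s option)" where "Zi = blk 1 v 0 (mat 1)"
  define A' where "A' = P - outer w v"
  define M0 where "M0 = blk 0 0 (- w) A'"
  have L: "blk (a - v \<bullet> (P *v v)) (P *v v) (- (P *v v)) P = L0 - outer ((-a) *\<^sub>R vecb 1 0) (vecb 1 0)"
    by (simp add: L0_def w_def outer_vecb blk_diff)
  have ZZ: "Zi ** blk 1 (- v) 0 (mat 1) = mat 1" by (simp add: Zi_def blk_mult blk_mat)
  hence Zinv: "matrix_inv Zi = blk 1 (- v) 0 (mat 1)" by (rule inv_eq)
  have Zinvt: "invertible Zi" using ZZ invertibleI by blast
  have L0sim: "L0 = Zi ** M0 ** matrix_inv Zi"
  proof -
    have tA: "transpose A' *v v = w - (v \<bullet> w) *\<^sub>R v"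
      by (simp add: A'_def transpose_diff Ps outer_transpose outer_mv w_def
          matrix_vector_mult_diff_rdistrib inner_commute)
    hence tA': "v v* A' = w - (v \<bullet> w) *\<^sub>R v" by simp
    have oA: "outer (- w) (- v) + A' = P" by (simp add: A'_def outer_neg)
    show ?thesis
      unfolding Zinv unfolding Zi_def M0_def blk_mult
      by (simp add: tA' oA L0_def)
  qed
  have e1: "esym k L0 = esym k P - v \<bullet> (Ymat (k - 1) P *v w)"
    unfolding L0sim esym_sim[OF Zinvt] M0_def lower_esym A'_def esym_rank1 ..
  have D: "(mat 1 - outer v v) ** P = P - outer v w"
    using outer_mm_sym[OF Ps] by (simp add: mm_simps w_def)
  have e2: "esym k ((mat 1 - outer v v) ** P) = esym k P - w \<bullet> (Ymat (k - 1) P *v v)"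
    unfolding D esym_rank1 ..
  have sw: "w \<bullet> (Ymat (k - 1) P *v v) = v \<bullet> (Ymat (k - 1) P *v w)"
    unfolding w_def inner_mv_left Ps matrix_vector_mul_assoc Ymat_comm ..
  have c: "Ymat (k - 1) L0 $ None $ None = esym (k - 1) P"
  proof -
    have "Ymat (k - 1) L0 = Zi ** Ymat (k - 1) M0 ** matrix_inv Zi"
      unfolding L0sim Ymat_sim[OF Zinvt] ..
    also have "\<dots> = Zi ** blk (esym (k - 1) A') 0 (Ymat (k - 1 - 1) A' *v w) (Ymat (k - 1) A') ** blk 1 (- v) 0 (mat 1)"
      unfolding M0_def lower_Ymat Zinv by (simp add: mv_neg)
    also have "\<dots> $ None $ None = esym (k - 1) A' + v \<bullet> (Ymat (k - 1 - 1) A' *v w)"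
      unfolding Zi_def blk_mult by simp
    finally have "Ymat (k - 1) L0 $ None $ None = esym (k - 1) A' + v \<bullet> (Ymat (k - 1 - 1) A' *v w)" .
    also have "\<dots> = esym (k - 1) P" unfolding A'_def esym_rank1 Ymat_rank1 by simp
    finally show ?thesis .
  qed
  have "esym k (blk (a - v \<bullet> (P *v v)) (P *v v) (- (P *v v)) P) = esym k L0 + a * esym (k - 1) P"
    unfolding L esym_rank1 by (simp add: u_corner2 c)
  thus ?thesis using e1 e2 sw by simp
qed


lemma Ymat_sym: "transpose P = P \<Longrightarrow> transpose (Ymat k P) = Ymat k (P::real^'s^('s::finite))"
  by (metis Ymat_transpose)

theorem CORE:
  fixes P :: "real^'s^('s::finite)" and v :: "real^'s" and a :: real
  assumes Ps: "transpose P = P"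
  defines "w \<equiv> P *v v"
  defines "D \<equiv> P - outer v w"
  shows "Ymat k (blk (a - v \<bullet> w) w (- w) P)
      = blk (esym k P) (- (Ymat (k - 1) P *v w)) (P *v (Ymat (k - 1) P *v v))
            (Ymat k D - outer v (Ymat (k - 1) P *v w) + a *\<^sub>R Ymat (k - 1) P)"
proof (cases "k < 0")
  case True thus ?thesis by (simp add: Ymat_neg blk_zero esym_neg)
next
  case False
  then obtain m where m: "k = int m" by (metis nonneg_eq_int not_less)
  have DT: "transpose D = P - outer w v" by (simp add: D_def transpose_diff Ps outer_transpose)
  have f1: "esym j D = esym j P - w \<bullet> (Ymat (j - 1) P *v v)" for j
    unfolding D_def esym_rank1 ..
  have R2a: "Ymat j D *v v = Ymat j P *v v" for j unfolding D_def Ymat_rank1 ..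
  have R2b: "transpose (Ymat j D) *v w = Ymat j P *v w" for j
    unfolding Ymat_transpose[symmetric] DT Ymat_rank1 ..
  have L: "esym j (blk (a - v \<bullet> w) w (- w) P) = esym j D + a * esym (j - 1) P" for j
  proof -
    have "D = (mat 1 - outer v v) ** P" using outer_mm_sym[OF Ps] by (simp add: D_def mm_simps w_def)
    thus ?thesis using R3[OF Ps, of j a v] by (simp add: w_def)
  qed
  show ?thesis unfolding m
  proof (induction m)
    case 0 thus ?case by (simp add: Ymat_0 Ymat_neg blk_mat)
  next
    case (Suc m)
    let ?L = "blk (a - v \<bullet> w) w (- w) P"
    let ?e = "esym (int m) P" and ?Yp = "Ymat (int m - 1) P" and ?Yd = "Ymat (int m) D"
    have rec: "Ymat (int (Suc m)) ?L = esym (int (Suc m)) ?L *\<^sub>R mat 1 - ?L ** Ymat (int m) ?L"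
      using Ymat_rec[of "int (Suc m)" ?L] by simp
    have f2: "Ymat (int m) P = ?e *\<^sub>R mat 1 - P ** ?Yp"
      using Ymat_rec[of "int m" P] by simp
    have f3: "Ymat (int (Suc m)) D = esym (int (Suc m)) D *\<^sub>R mat 1 - D ** ?Yd"
      using Ymat_rec[of "int (Suc m)" D] by simp
    have YpT: "transpose ?Yp = ?Yp" using Ymat_sym[OF Ps] .
    define S where "S = ?Yd - outer v (?Yp *v w) + a *\<^sub>R ?Yp"
    have ST: "transpose S *v w = Ymat (int m) P *v w - (v \<bullet> w) *\<^sub>R (?Yp *v w) + a *\<^sub>R (?Yp *v w)"
      by (simp add: S_def transpose_diff transpose_add transpose_scalar outer_transpose
          matrix_vector_mult_add_rdistrib matrix_vector_mult_diff_rdistrib mv_scaleR outer_mv YpT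
          R2b inner_commute del: transpose_matrix_vector)
    have c00: "esym (int (Suc m)) ?L - ((a - v \<bullet> w) * ?e + w \<bullet> (P *v (?Yp *v v))) = esym (int (Suc m)) P"
    proof -
      have "w \<bullet> (Ymat (int m) P *v v) = ?e * (w \<bullet> v) - w \<bullet> (P *v (?Yp *v v))"
        unfolding f2 by (simp add: matrix_vector_mult_diff_rdistrib mv_scaleR matrix_vector_mul_assoc inner_diff_right)
      thus ?thesis using L[of "int (Suc m)"] f1[of "int (Suc m)"] by (simp add: algebra_simps inner_commute)
    qed
    have c0s: "(a - v \<bullet> w) *\<^sub>R (- (?Yp *v w)) + transpose S *v w = Ymat (int m) P *v w"
      unfolding ST by (simp add: algebra_simps)
    have cs0: "?e *\<^sub>R (- w) + P *v (P *v (?Yp *v v)) = - (P *v (Ymat (int m) P *v v))"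
      unfolding f2 by (simp add: matrix_vector_mult_diff_rdistrib mv_scaleR matrix_vector_mul_assoc w_def
          matrix_vector_right_distrib algebra_simps)
    have css: "esym (int (Suc m)) ?L *\<^sub>R mat 1 - (outer (- w) (- (?Yp *v w)) + P ** S)
        = Ymat (int (Suc m)) D - outer v (Ymat (int m) P *v w) + a *\<^sub>R Ymat (int m) P"
    proof -
      have PS: "P ** S = P ** ?Yd - outer w (?Yp *v w) + a *\<^sub>R (P ** ?Yp)"
        by (simp add: S_def mm_simps mm_outer w_def)
      have PD: "P ** ?Yd = D ** ?Yd + outer v (Ymat (int m) P *v w)"
      proof -
        have "P = D + outer v w" by (simp add: D_def)
        hence "P ** ?Yd = D ** ?Yd + outer v w ** ?Yd" by (simp add: mm_radd)
        also have "outer v w ** ?Yd = outer v (Ymat (int m) P *v w)" by (simp add: outer_mm R2b del: transpose_matrix_vector)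
        finally show ?thesis .
      qed
      show ?thesis unfolding PS PD f3 f2 L by (simp add: outer_neg algebra_simps mm_simps)
    qed
    show ?case
      unfolding rec Suc.IH blk_scale_mat blk_mult blk_diff
      unfolding S_def[symmetric]
      by (simp only: blk_eq_iff) (use c00 c0s cs0 css in \<open>simp add: blk_mat algebra_simps\<close>)
  qed
qed


lemma posdef_invertible:
  fixes A :: "real^'n^('n::finite)"
  assumes "\<And>x. x \<noteq> 0 \<Longrightarrow> x \<bullet> (A *v x) > 0"
  shows "invertible A"
proof -
  have "inj ((*v) A)"
  proof (rule injI)
    fix x y assume "A *v x = A *v y"
    hence "A *v (x - y) = 0" by (simp add: matrix_vector_mult_diff_distrib)
    hence "(x - y) \<bullet> (A *v (x - y)) = 0" by simp
    thus "x = y" using assms[of "x - y"] by (cases "x - y = 0") auto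
  qed
  hence "det (matrix ((*v) A)) \<noteq> 0" by (subst det_nz_iff_inj) auto
  thus ?thesis by (simp add: invertible_det_nz)
qed

lemma outer_outer: "outer x y ** outer z w = (y \<bullet> z) *\<^sub>R outer x (w::real^'n::finite)"
  by (simp add: mm_outer outer_mv outer_scaleR)

locale lorentz =
  fixes v :: "real^'s::finite"
  assumes vv: "v \<bullet> v < 1"
begin

definition lam where "lam = 1 / sqrt (1 - v \<bullet> v)"
definition kap where "kap = lam^2 / (1 + lam)"
definition G :: "real^'s^'s" where "G = mat 1 - outer v v"
definition R0 :: "real^'s^'s" where "R0 = mat 1 + kap *\<^sub>R outer v v"

lemma lam_pos: "lam > 0" using vv by (simp add: lam_def)
lemma lam_sq: "lam^2 * (1 - v \<bullet> v) = 1"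
  using vv by (simp add: lam_def power_divide)
lemma vv_eq: "v \<bullet> v = 1 - 1 / lam^2"
  using lam_sq lam_pos by (simp add: field_simps)
lemma kap_vv: "kap * (v \<bullet> v) = lam - 1"
proof -
  have "kap * (v \<bullet> v) = lam^2 / (1 + lam) * (1 - 1 / lam^2)" by (simp only: kap_def vv_eq)
  also have "\<dots> = (lam^2 * (1 - 1 / lam^2)) / (1 + lam)" by simp
  also have "lam^2 * (1 - 1 / lam^2) = lam^2 - 1" using lam_pos by (simp add: right_diff_distrib)
  also have "lam^2 - 1 = (lam - 1) * (1 + lam)" by (simp add: power2_eq_square algebra_simps)
  also have "(lam - 1) * (1 + lam) / (1 + lam) = lam - 1" using lam_pos by simp
  finally show ?thesis .
qed
lemma kap_sq: "2 * kap + kap^2 * (v \<bullet> v) = lam^2"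
proof -
  have "kap^2 * (v \<bullet> v) = kap * (lam - 1)" using kap_vv by (simp add: power2_eq_square)
  thus ?thesis using lam_pos unfolding kap_def by (simp add: field_simps power2_eq_square)
qed

lemma GG: "G ** (mat 1 + lam^2 *\<^sub>R outer v v) = mat 1"
proof -
  have "G ** (mat 1 + lam^2 *\<^sub>R outer v v) = mat 1 + (lam^2 - 1 - lam^2 * (v \<bullet> v)) *\<^sub>R outer v v"
    by (simp add: G_def mm_simps outer_outer algebra_simps)
  also have "lam^2 - 1 - lam^2 * (v \<bullet> v) = 0" using lam_sq by (simp add: algebra_simps)
  finally show "G ** (mat 1 + lam^2 *\<^sub>R outer v v) = mat 1" by simp
qed

lemma Ginv: "matrix_inv G = mat 1 + lam^2 *\<^sub>R outer v v"
  by (rule inv_eq[OF GG])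

lemma R0_sq: "R0 ** R0 = mat 1 + lam^2 *\<^sub>R outer v v"
proof -
  have "R0 ** R0 = mat 1 + (2 * kap + kap^2 * (v \<bullet> v)) *\<^sub>R outer v v"
    by (simp add: R0_def mm_simps outer_outer) (simp add: vec_eq_iff algebra_simps power2_eq_square)
  thus ?thesis by (simp add: kap_sq)
qed

lemma kap_pos: "kap > 0" using lam_pos by (simp add: kap_def)

lemma R0_quad: "x \<bullet> (R0 *v x) = x \<bullet> x + kap * (v \<bullet> x)^2"
  by (simp add: R0_def matrix_vector_mult_add_rdistrib mv_scaleR outer_mv inner_add_right
      power2_eq_square inner_commute)

lemma R0_sym: "transpose R0 = R0"
  by (simp add: R0_def transpose_add transpose_scalar outer_transpose)

lemma R0_posdef: "posdef R0"
  unfolding posdef_def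
proof (intro conjI allI impI)
  show "transpose R0 = R0" by (rule R0_sym)
  fix x :: "real^'s" assume "x \<noteq> 0"
  hence "x \<bullet> x > 0" by simp
  thus "x \<bullet> (R0 *v x) > 0" unfolding R0_quad using kap_pos by (simp add: add_pos_nonneg)
qed

lemma posdef_unique:
  assumes R: "posdef R" and RR: "R ** R = mat 1 + lam^2 *\<^sub>R outer v v"
  shows "R = R0"
proof -
  let ?A = "mat 1 + lam^2 *\<^sub>R outer v v"
  have cA: "R ** ?A = ?A ** R" unfolding RR[symmetric] by (simp add: matrix_mul_assoc)
  have R0A: "R0 = (1 - kap / lam^2) *\<^sub>R mat 1 + (kap / lam^2) *\<^sub>R ?A"
    using lam_pos by (simp add: R0_def algebra_simps scaleR_add_right)
  have "R + lam^2 *\<^sub>R (R ** outer v v) = R + lam^2 *\<^sub>R (outer v v ** R)"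
    using cA by (simp add: mm_simps)
  hence cO: "R ** outer v v = outer v v ** R" using lam_pos by simp
  have cR: "R ** R0 = R0 ** R"
    by (simp add: R0_def mm_simps cO)
  have "(R - R0) ** (R + R0) = R ** R - R0 ** R0 + (R ** R0 - R0 ** R)"
    by (simp add: mm_simps matrix_add_ldistrib algebra_simps)
  also have "\<dots> = 0" using RR R0_sq cR by simp
  finally have z: "(R - R0) ** (R + R0) = 0" .
  have "invertible (R + R0)"
  proof (rule posdef_invertible)
    fix x :: "real^'s" assume "x \<noteq> 0"
    hence "x \<bullet> (R *v x) > 0" "x \<bullet> (R0 *v x) > 0" using R R0_posdef unfolding posdef_def by auto
    thus "x \<bullet> ((R + R0) *v x) > 0" by (simp add: matrix_vector_mult_add_rdistrib inner_add_right)
  qed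
  hence "(R - R0) ** (R + R0) ** matrix_inv (R + R0) = R - R0"
    by (simp add: matrix_mul_assoc[symmetric] inv_right)
  thus ?thesis using z by simp
qed

lemma Lh_eq: "inv_sqrt G = R0"
  unfolding inv_sqrt_def Ginv
proof (rule the_equality)
  show "posdef R0 \<and> R0 ** R0 = mat 1 + lam\<^sup>2 *\<^sub>R outer v v" using R0_posdef R0_sq by simp
  fix R assume "posdef R \<and> R ** R = mat 1 + lam\<^sup>2 *\<^sub>R outer v v"
  thus "R = R0" using posdef_unique by blast
qed

lemma R0_v: "R0 *v v = lam *\<^sub>R v"
  by (simp add: R0_def matrix_vector_mult_add_rdistrib mv_scaleR outer_mv kap_vv algebra_simps)

lemma R0G: "R0 ** R0 ** G = mat 1"
  unfolding R0_sq using GG matrix_left_right_inverse by blast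

lemma det_R0: "det R0 = lam"
proof -
  have "R0 = mat 1 - outer (- kap *\<^sub>R v) v" by (simp add: R0_def outer_scaleR outer_neg)
  hence "det R0 = 1 - v \<bullet> (- kap *\<^sub>R v)" by (simp add: det_rank_one)
  thus ?thesis using kap_vv by (simp add: algebra_simps)
qed

end


lemma Xi_blk: "Xi \<xi> = blk 1 0 \<xi> (mat 1)"
  by (simp add: Xi_def blk_def mat_def vec_eq_iff split: option.split)

lemma blockdiag_blk: "blockdiag a X = blk a 0 0 X"
  by (simp add: blockdiag_def blk_def vec_eq_iff split: option.split)

lemma nup_vecb: "nup A sh = vecb (1 / A) (- (1 / A) *\<^sub>R sh)"
  by (simp add: nup_def vecb_def vec_eq_iff split: option.split)

lemma ndn_vecb: "ndn A = vecb (- A) 0"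
  by (simp add: ndn_def vecb_def vec_eq_iff split: option.split)

lemma perp_blk: "A \<noteq> 0 \<Longrightarrow> perp A sh = blk 0 0 sh (mat 1)"
  by (simp add: perp_def nup_def ndn_def blk_def mat_def vec_eq_iff split: option.split)

definition frame :: "real \<Rightarrow> real^'s^'s \<Rightarrow> real^'s \<Rightarrow> real^('s::finite option)^('s option)" where
  "frame A \<epsilon> sh = blk A 0 (\<epsilon> *v sh) \<epsilon>"

definition eta :: "real^('s::finite option)^('s option)" where
  "eta = blk (-1) 0 0 (mat 1)"

lemma adm_frame:
  "adm (- (A^2)) (transpose \<epsilon> ** \<epsilon>) sh = transpose (frame A \<epsilon> sh) ** eta ** frame A \<epsilon> sh"
proof -
  have f: "frame A \<epsilon> sh = blk A 0 0 \<epsilon> ** Xi sh" by (simp add: frame_def Xi_blk blk_mult)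
  have m: "transpose (blk A 0 0 \<epsilon>) ** eta ** blk A 0 0 \<epsilon> = blockdiag (- (A^2)) (transpose \<epsilon> ** \<epsilon>)"
    by (simp add: blk_transpose eta_def blk_mult blockdiag_blk power2_eq_square)
  have "transpose (frame A \<epsilon> sh) ** eta ** frame A \<epsilon> sh
      = transpose (Xi sh) ** (transpose (blk A 0 0 \<epsilon>) ** eta ** blk A 0 0 \<epsilon>) ** Xi sh"
    unfolding f by (simp add: matrix_transpose_mul matrix_mul_assoc)
  thus ?thesis unfolding m adm_def by simp
qed

lemma frame_inv:
  assumes A: "A \<noteq> 0" and e: "invertible \<epsilon>"
  shows "frame A \<epsilon> sh ** blk (1 / A) 0 (- (1 / A) *\<^sub>R sh) (matrix_inv \<epsilon>) = mat 1"
  using A inv_right[OF e] by (simp add: frame_def blk_mult blk_mat mv_scaleR mv_neg matrix_vector_mult_scaleR)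

lemma frame_invertible: "A \<noteq> 0 \<Longrightarrow> invertible \<epsilon> \<Longrightarrow> invertible (frame A \<epsilon> sh)"
  using frame_inv invertibleI by blast

lemma frame_minv: "A \<noteq> 0 \<Longrightarrow> invertible \<epsilon> \<Longrightarrow> matrix_inv (frame A \<epsilon> sh) = blk (1 / A) 0 (- (1 / A) *\<^sub>R sh) (matrix_inv \<epsilon>)"
  using frame_inv inv_eq by blast

lemma frame_nup: "A \<noteq> 0 \<Longrightarrow> frame A \<epsilon> sh *v nup A sh = vecb 1 0"
  by (simp add: frame_def nup_vecb blk_mv mv_scaleR mv_neg matrix_vector_mult_scaleR)

lemma frame_perp: "A \<noteq> 0 \<Longrightarrow> frame A \<epsilon> sh ** perp A sh = blk 0 0 (\<epsilon> *v sh) \<epsilon>"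
  by (simp add: frame_def perp_blk blk_mult)

lemma eta_mult: "eta ** blk a r c A = blk (- a) (- r) c A"
  by (simp add: eta_def blk_mult)

theorem PROJ:
  fixes \<epsilon> Sb :: "real^'s^('s::finite)" and sh c r :: "real^'s" and y A :: real
  assumes A: "A \<noteq> 0" and e: "invertible \<epsilon>"
  defines "E \<equiv> frame A \<epsilon> sh"
  defines "G \<equiv> adm (- (A^2)) (transpose \<epsilon> ** \<epsilon>) sh"
  defines "X \<equiv> matrix_inv E ** blk y r c Sb ** E"
  shows "proj_rho G A sh X = - y"
    and "proj_j G A sh X = - (transpose \<epsilon> *v c)"
    and "proj_J G A sh (transpose \<epsilon> ** \<epsilon>) X = matrix_inv \<epsilon> ** Sb ** \<epsilon>"
proof -
  have Ei: "invertible E" unfolding E_def using frame_invertible[OF A e] .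
  have GX: "G ** X = transpose E ** (eta ** blk y r c Sb ** E)"
  proof -
    have "G ** X = transpose E ** eta ** (E ** matrix_inv E) ** blk y r c Sb ** E"
      unfolding G_def X_def adm_frame E_def by (simp add: matrix_mul_assoc)
    thus ?thesis using inv_right[OF Ei] by (simp add: matrix_mul_assoc)
  qed
  have En: "E *v nup A sh = vecb 1 0" unfolding E_def by (rule frame_nup[OF A])
  have Ku: "eta ** blk y r c Sb ** E *v nup A sh = vecb (- y) c"
    by (simp add: matrix_vector_mul_assoc[symmetric] En eta_mult blk_mv)
  show "proj_rho G A sh X = - y"
  proof -
    have "G ** X *v nup A sh = transpose E *v vecb (- y) c"
      unfolding GX matrix_vector_mul_assoc[symmetric] En by (simp add: eta_def blk_mv del: transpose_matrix_vector)
    hence "proj_rho G A sh X = (E *v nup A sh) \<bullet> vecb (- y) c"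
      unfolding proj_rho_def inner_mv_left by simp
    thus ?thesis by (simp add: En vecb_inner)
  qed
  have EP: "transpose (perp A sh) *v (transpose E *v z) = transpose (blk 0 0 (\<epsilon> *v sh) \<epsilon>) *v z" for z
    by (simp add: matrix_vector_mul_assoc matrix_transpose_mul[symmetric] E_def frame_perp[OF A]
        del: transpose_matrix_vector)
  show "proj_j G A sh X = - (transpose \<epsilon> *v c)"
    unfolding proj_j_def GX matrix_vector_mul_assoc[symmetric] EP En
    by (simp add: blk_transpose blk_mv vec_eq_iff eta_def del: transpose_matrix_vector)
  have JJ: "transpose (perp A sh) ** (G ** X) ** perp A sh
      = transpose (blk 0 0 (\<epsilon> *v sh) \<epsilon>) ** (eta ** blk y r c Sb) ** blk 0 0 (\<epsilon> *v sh) \<epsilon>"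
  proof -
    have "transpose (perp A sh) ** (G ** X) ** perp A sh
        = transpose (E ** perp A sh) ** (eta ** blk y r c Sb) ** (E ** perp A sh)"
      unfolding GX by (simp add: matrix_transpose_mul matrix_mul_assoc)
    thus ?thesis by (simp add: E_def frame_perp[OF A])
  qed
  have inner: "(\<chi> i l. (transpose (perp A sh) ** (G ** X) ** perp A sh) $ Some i $ Some l)
      = transpose \<epsilon> ** Sb ** \<epsilon>"
    unfolding JJ by (simp add: blk_transpose eta_mult blk_mult vec_eq_iff)
  have si: "matrix_inv (transpose \<epsilon> ** \<epsilon>) = matrix_inv \<epsilon> ** transpose (matrix_inv \<epsilon>)"
    using inv_mult[OF transpose_invertible[OF e] e] inv_transpose[OF e] by simp
  show "proj_J G A sh (transpose \<epsilon> ** \<epsilon>) X = matrix_inv \<epsilon> ** Sb ** \<epsilon>"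
    unfolding proj_J_def inner si
  proof -
    have "matrix_inv \<epsilon> ** transpose (matrix_inv \<epsilon>) ** (transpose \<epsilon> ** Sb ** \<epsilon>)
        = matrix_inv \<epsilon> ** (transpose (\<epsilon> ** matrix_inv \<epsilon>)) ** Sb ** \<epsilon>"
      by (simp add: matrix_transpose_mul matrix_mul_assoc)
    thus "matrix_inv \<epsilon> ** transpose (matrix_inv \<epsilon>) ** (transpose \<epsilon> ** Sb ** \<epsilon>) = matrix_inv \<epsilon> ** Sb ** \<epsilon>"
      using inv_right[OF e] by simp
  qed
qed


lemma eta_eta: "eta ** eta = (mat 1 :: real^('s::finite option)^('s option))"
  by (simp add: eta_def blk_mult blk_mat)

lemma eta_T: "transpose eta = (eta :: real^('s::finite option)^('s option))"
  by (simp add: eta_def blk_transpose)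

lemma adm_inv:
  assumes A: "A \<noteq> 0" and e: "invertible \<epsilon>"
  shows "matrix_inv (adm (- (A^2)) (transpose \<epsilon> ** \<epsilon>) sh)
       = matrix_inv (frame A \<epsilon> sh) ** eta ** transpose (matrix_inv (frame A \<epsilon> sh))"
proof (rule inv_eq)
  let ?E = "frame A \<epsilon> sh"
  have Ei: "invertible ?E" using frame_invertible[OF A e] .
  have "adm (- (A^2)) (transpose \<epsilon> ** \<epsilon>) sh ** (matrix_inv ?E ** eta ** transpose (matrix_inv ?E))
      = transpose ?E ** eta ** (?E ** matrix_inv ?E) ** eta ** transpose (matrix_inv ?E)"
    unfolding adm_frame by (simp add: matrix_mul_assoc)
  also have "\<dots> = transpose (matrix_inv ?E ** ?E)"
    using inv_right[OF Ei] by (simp add: matrix_mul_assoc[symmetric] eta_eta matrix_transpose_mul)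
  also have "\<dots> = mat 1" using inv_left[OF Ei] by simp
  finally show "adm (- (A^2)) (transpose \<epsilon> ** \<epsilon>) sh ** (matrix_inv ?E ** eta ** transpose (matrix_inv ?E)) = mat 1" .
qed

theorem FRAME_L:
  fixes \<epsilon> Ch :: "real^'s^('s::finite)" and q w :: "real^'s" and A HH :: real
  assumes A: "A \<noteq> 0" and e: "invertible \<epsilon>" and chi: "transpose Ch = Ch"
  defines "sh \<equiv> q + A *\<^sub>R (matrix_inv \<epsilon> *v w)"
  defines "P \<equiv> transpose (matrix_inv \<epsilon>) ** Ch ** matrix_inv \<epsilon>"
  shows "matrix_inv (adm (- (A^2)) (transpose \<epsilon> ** \<epsilon>) sh) ** adm (- HH) Ch q
       = matrix_inv (frame A \<epsilon> sh) ** blk (HH / A^2 - w \<bullet> (P *v w)) (P *v w) (- (P *v w)) P ** frame A \<epsilon> sh"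
proof -
  let ?E = "frame A \<epsilon> sh"
  let ?Ei = "matrix_inv ?E"
  let ?ei = "matrix_inv \<epsilon>"
  have Ei: "invertible ?E" using frame_invertible[OF A e] .
  have Eiv: "?Ei = blk (1 / A) 0 (- (1 / A) *\<^sub>R sh) ?ei" by (rule frame_minv[OF A e])
  have Phi: "Xi q ** ?Ei = blk (1 / A) 0 (- (?ei *v w)) ?ei"
  proof -
    have "(1 / A) *\<^sub>R q - (1 / A) *\<^sub>R sh = - (?ei *v w)" using A by (simp add: sh_def algebra_simps)
    thus ?thesis unfolding Eiv Xi_blk blk_mult by simp
  qed
  have core: "eta ** transpose ?Ei ** adm (- HH) Ch q ** ?Ei = blk (HH / A^2 - w \<bullet> (P *v w)) (P *v w) (- (P *v w)) P"
  proof -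
    have "eta ** transpose ?Ei ** adm (- HH) Ch q ** ?Ei
        = eta ** (transpose (Xi q ** ?Ei) ** blockdiag (- HH) Ch ** (Xi q ** ?Ei))"
      unfolding adm_def by (simp add: matrix_transpose_mul matrix_mul_assoc)
    also have "\<dots> = blk (HH / A^2 - w \<bullet> (P *v w)) (P *v w) (- (P *v w)) P"
    proof -
      have i1: "(?ei *v w) \<bullet> (Ch *v (?ei *v w)) = w \<bullet> (P *v w)"
        by (simp add: P_def inner_mv_left matrix_vector_mul_assoc matrix_mul_assoc del: transpose_matrix_vector vector_transpose_matrix)
      have i2: "transpose ?ei *v (Ch *v (?ei *v w)) = P *v w"
        by (simp add: P_def matrix_vector_mul_assoc matrix_mul_assoc del: transpose_matrix_vector vector_transpose_matrix)
      have i4: "transpose ?ei ** (Ch ** ?ei) = P" by (simp add: P_def matrix_mul_assoc)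
      have i2': "transpose (Ch ** ?ei) *v (?ei *v w) = P *v w"
        using i2 by (simp add: matrix_transpose_mul chi matrix_vector_mul_assoc matrix_mul_assoc del: transpose_matrix_vector vector_transpose_matrix)
      have i5: "transpose ?ei ** Ch ** ?ei = P" by (simp add: P_def)
      have i6: "(transpose ?ei ** Ch) *v (?ei *v w) = P *v w"
        using i2 by (simp add: matrix_vector_mul_assoc matrix_mul_assoc del: transpose_matrix_vector vector_transpose_matrix)
      have i1': "(Ch *v (?ei *v w)) \<bullet> (?ei *v w) = w \<bullet> (P *v w)" using i1 by (simp add: inner_commute)
      show ?thesis unfolding Phi
        by (simp add: blk_transpose blockdiag_blk blk_mult eta_mult mv_neg i1 i2 i2' i4 i5 i6 i1' chi power2_eq_square
            del: transpose_matrix_vector vector_transpose_matrix)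
    qed
    finally show ?thesis .
  qed
  have "matrix_inv (adm (- (A^2)) (transpose \<epsilon> ** \<epsilon>) sh) ** adm (- HH) Ch q
      = ?Ei ** (eta ** transpose ?Ei ** adm (- HH) Ch q ** ?Ei) ** ?E"
  proof -
    have r: "M ** ?Ei ** ?E = M" for M :: "real^('s option)^('s option)"
      by (simp only: matrix_mul_assoc[symmetric] inv_left[OF Ei] matrix_mul_rid)
    show ?thesis unfolding adm_inv[OF A e] by (simp add: matrix_mul_assoc r)
  qed
  thus ?thesis unfolding core .
qed


lemma Phi_lemma:
  assumes A: "A \<noteq> 0" and e: "invertible \<epsilon>"
  shows "Xi q ** matrix_inv (frame A \<epsilon> (q + A *\<^sub>R (matrix_inv \<epsilon> *v w))) = blk (1 / A) 0 (- (matrix_inv \<epsilon> *v w)) (matrix_inv \<epsilon>)"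
proof -
  have "(1 / A) *\<^sub>R q - (1 / A) *\<^sub>R (q + A *\<^sub>R (matrix_inv \<epsilon> *v w)) = - (matrix_inv \<epsilon> *v w)"
    using A by (simp add: algebra_simps)
  thus ?thesis unfolding frame_minv[OF A e] Xi_blk blk_mult by simp
qed

lemma adm_sym: "transpose X = X \<Longrightarrow> transpose (adm a X q) = adm a X q"
  by (simp add: adm_def matrix_transpose_mul matrix_mul_assoc blockdiag_blk blk_transpose)

lemma adm_invertible:
  fixes \<epsilon> :: "real^'s^('s::finite)"
  assumes A: "A \<noteq> 0" and e: "invertible \<epsilon>"
  shows "invertible (adm (- (A^2)) (transpose \<epsilon> ** \<epsilon>) sh)"
proof -
  let ?E = "frame A \<epsilon> sh"
  have Ei: "invertible ?E" using frame_invertible[OF A e] .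
  have "adm (- (A^2)) (transpose \<epsilon> ** \<epsilon>) sh ** (matrix_inv ?E ** eta ** transpose (matrix_inv ?E)) = mat 1"
  proof -
    have "adm (- (A^2)) (transpose \<epsilon> ** \<epsilon>) sh ** (matrix_inv ?E ** eta ** transpose (matrix_inv ?E))
      = transpose ?E ** eta ** (?E ** matrix_inv ?E) ** eta ** transpose (matrix_inv ?E)"
      unfolding adm_frame by (simp add: matrix_mul_assoc)
    also have "\<dots> = transpose (matrix_inv ?E ** ?E)"
      using inv_right[OF Ei] by (simp add: matrix_mul_assoc[symmetric] eta_eta matrix_transpose_mul)
    also have "\<dots> = mat 1" using inv_left[OF Ei] by simp
    finally show ?thesis .
  qed
  thus ?thesis by (rule invertibleI)
qed

theorem BIM:
  fixes h :: "real^('s::finite option)^('s option)" and e m :: "real^'s^'s" and Nsh Msh :: "real^'s" and N M :: real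
  assumes N: "N \<noteq> 0" and M: "M \<noteq> 0" and e: "invertible e" and m: "invertible m"
  defines "E \<equiv> frame N e Nsh" and "F \<equiv> frame M m Msh"
  defines "g \<equiv> adm (- (N^2)) (transpose e ** e) Nsh" and "f \<equiv> adm (- (M^2)) (transpose m ** m) Msh"
  assumes hs: "transpose h = h"
  assumes Hm: "transpose (matrix_inv E) ** h ** matrix_inv F ** eta ** transpose (transpose (matrix_inv E) ** h ** matrix_inv F) = eta"
  shows "matrix_inv (matrix_inv g ** h) = matrix_inv f ** h"
proof -
  let ?Hm = "transpose (matrix_inv E) ** h ** matrix_inv F"
  have Ei: "invertible E" unfolding E_def by (rule frame_invertible[OF N e])
  have Fi: "invertible F" unfolding F_def by (rule frame_invertible[OF M m])
  have hE: "h = transpose E ** ?Hm ** F"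
  proof -
    have "transpose E ** ?Hm ** F = transpose (matrix_inv E ** E) ** h ** (matrix_inv F ** F)"
      by (simp add: matrix_transpose_mul matrix_mul_assoc)
    thus ?thesis using inv_left[OF Ei] inv_left[OF Fi] by simp
  qed
  have finv: "matrix_inv f = matrix_inv F ** eta ** transpose (matrix_inv F)"
    unfolding f_def F_def by (rule adm_inv[OF M m])
  have hfh: "h ** matrix_inv f ** h = g"
  proof -
    have "h ** matrix_inv f ** h = h ** matrix_inv f ** transpose h" using hs by simp
    also have "\<dots> = transpose E ** ?Hm ** (F ** matrix_inv F) ** eta ** transpose (F ** matrix_inv F) ** transpose ?Hm ** E"
      unfolding finv
      apply (subst (1) hE) apply (subst (2) hE)
      by (simp add: matrix_transpose_mul matrix_mul_assoc)
    also have "\<dots> = transpose E ** (?Hm ** eta ** transpose ?Hm) ** E"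
      using inv_right[OF Fi] by (simp add: matrix_mul_assoc)
    also have "\<dots> = g" unfolding Hm unfolding g_def E_def adm_frame by (simp add: matrix_mul_assoc)
    finally show ?thesis .
  qed
  have gi: "invertible g" unfolding g_def by (rule adm_invertible[OF N e])
  show ?thesis
  proof (rule inv_eq)
    have "matrix_inv g ** h ** (matrix_inv f ** h) = matrix_inv g ** (h ** matrix_inv f ** h)"
      by (simp add: matrix_mul_assoc)
    thus "matrix_inv g ** h ** (matrix_inv f ** h) = mat 1" unfolding hfh using inv_left[OF gi] by simp
  qed
qed


lemma Ymat_rec_all: "Ymat k X = esym k X *\<^sub>R mat 1 - X ** Ymat (k - 1) (X::real^'n^('n::finite))"
proof (cases "k < 0")
  case True thus ?thesis by (simp add: Ymat_neg)
next
  case False thus ?thesis by (simp add: Ymat_rec)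
qed

lemma SIMP_S:
  fixes P :: "real^'s^('s::finite)"
  assumes Ps: "transpose P = P"
  shows "Ymat k (P - outer v (P *v v)) - outer v (Ymat (k - 1) P *v (P *v v))
       = esym k (P - outer v (P *v v)) *\<^sub>R mat 1 - P ** Ymat (k - 1) (P - outer v (P *v v))"
proof -
  let ?D = "P - outer v (P *v v)"
  have DT: "transpose ?D = P - outer (P *v v) v" by (simp add: transpose_diff Ps outer_transpose)
  have R2b: "transpose (Ymat (k - 1) ?D) *v (P *v v) = Ymat (k - 1) P *v (P *v v)"
    unfolding Ymat_transpose[symmetric] DT Ymat_rank1 ..
  have "P ** Ymat (k - 1) ?D = ?D ** Ymat (k - 1) ?D + outer v (P *v v) ** Ymat (k - 1) ?D"
    by (simp add: mm_simps)
  also have "outer v (P *v v) ** Ymat (k - 1) ?D = outer v (Ymat (k - 1) P *v (P *v v))"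
    by (simp add: outer_mm R2b del: transpose_matrix_vector)
  finally show ?thesis
    using Ymat_rec_all[of k ?D] by (simp add: algebra_simps)
qed

locale mdata = lorentz v for v :: "real^'s::finite" +
  fixes N M :: real and q :: "real^'s" and e m :: "real^'s^'s"
  assumes N: "N > 0" and M: "M > 0" and e: "invertible e" and m: "invertible m"
    and chi_pd: "posdef (transpose e ** inv_sqrt (mat 1 - outer v v) ** m)"
begin

abbreviation "ei \<equiv> matrix_inv e"
abbreviation "mi \<equiv> matrix_inv m"
abbreviation "Lh \<equiv> R0"
abbreviation "Lhi \<equiv> matrix_inv R0"
definition "chi = transpose e ** Lh ** m"
definition "P = Lh ** m ** ei"
definition "Dc = P - outer v (P *v v)"
definition "P2 = Lh ** e ** mi"
definition "D2 = P2 - outer (- v) (P2 *v (- v))"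

lemma Lh_eq': "inv_sqrt (mat 1 - outer v v) = Lh" using Lh_eq by (simp add: G_def)

lemma chi_sym: "transpose chi = chi"
  using chi_pd unfolding posdef_def chi_def Lh_eq' by simp

lemma eiR: "e ** ei = mat 1" and eiL: "ei ** e = mat 1" using inv_right[OF e] inv_left[OF e] by auto
lemma miR: "m ** mi = mat 1" and miL: "mi ** m = mat 1" using inv_right[OF m] inv_left[OF m] by auto

lemma Lh_inv: "Lhi = Lh ** G"
  using R0G by (intro inv_eq) (simp add: matrix_mul_assoc)
lemma Lh_invertible: "invertible Lh" using R0G invertibleI by (metis matrix_mul_assoc)
lemma LhR: "Lh ** Lhi = mat 1" and LhL: "Lhi ** Lh = mat 1"
  using inv_right[OF Lh_invertible] inv_left[OF Lh_invertible] by auto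
lemma G_Lh: "G = Lhi ** Lhi"
proof -
  have "Lhi ** Lhi ** (Lh ** Lh ** G) = Lhi ** Lhi" using R0G by simp
  moreover have "Lhi ** Lhi ** (Lh ** Lh ** G) = G"
    using LhL by (simp add: matrix_mul_assoc) (simp add: matrix_mul_assoc[symmetric])
  ultimately show ?thesis by simp
qed
lemma Lhi_v: "Lhi *v v = (1 / lam) *\<^sub>R v"
proof -
  have "Lhi *v (Lh *v v) = v" by (simp add: matrix_vector_mul_assoc LhL)
  hence h: "lam *\<^sub>R (Lhi *v v) = v" using R0_v by (simp add: matrix_vector_mult_scaleR)
  have "Lhi *v v = (1 / lam) *\<^sub>R (lam *\<^sub>R (Lhi *v v))" using lam_pos by simp
  thus ?thesis unfolding h .
qed

lemma P_alt: "P = transpose ei ** chi ** ei"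
proof -
  have "transpose ei ** chi ** ei = transpose (e ** ei) ** Lh ** m ** ei"
    by (simp add: chi_def matrix_transpose_mul matrix_mul_assoc)
  thus ?thesis by (simp add: eiR P_def)
qed

lemma P_sym: "transpose P = P"
  unfolding P_alt by (simp add: matrix_transpose_mul chi_sym matrix_mul_assoc)

lemma chi_alt: "chi = transpose m ** Lh ** e"
proof -
  have "transpose chi = transpose m ** Lh ** e"
    by (simp add: chi_def matrix_transpose_mul R0_sym matrix_mul_assoc)
  thus ?thesis using chi_sym by simp
qed

lemma P2_alt: "P2 = transpose mi ** chi ** mi"
proof -
  have "transpose mi ** chi ** mi = transpose (m ** mi) ** Lh ** e ** mi"
    by (simp add: chi_alt matrix_transpose_mul matrix_mul_assoc)
  thus ?thesis by (simp add: miR P2_def)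
qed

lemma P2_sym: "transpose P2 = P2"
  unfolding P2_alt by (simp add: matrix_transpose_mul chi_sym matrix_mul_assoc)

lemma Dc_alt: "Dc = Lhi ** m ** ei"
proof -
  have "Dc = G ** P"
    using outer_mm_sym[OF P_sym, of v] by (simp add: Dc_def G_def mm_simps)
  also have "\<dots> = Lhi ** (Lhi ** Lh) ** m ** ei" by (simp add: G_Lh P_def matrix_mul_assoc)
  finally show ?thesis by (simp add: LhL)
qed

lemma D2_alt: "D2 = Lhi ** e ** mi"
proof -
  have "D2 = G ** P2"
    using outer_mm_sym[OF P2_sym, of v] by (simp add: D2_def G_def mm_simps outer_neg mv_neg)
  also have "\<dots> = Lhi ** (Lhi ** Lh) ** e ** mi" by (simp add: G_Lh P2_def matrix_mul_assoc)
  finally show ?thesis by (simp add: LhL)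
qed

end


context mdata begin

definition "HH = N * M / lam"
definition "Nsh = q + N *\<^sub>R (ei *v v)"
definition "gg = adm (- (N ^ 2)) (transpose e ** e) Nsh"
definition "hh = adm (- HH) chi q"
definition "EE = frame N e Nsh"
definition "a1 = HH / N^2"
definition "Lg = blk (a1 - v \<bullet> (P *v v)) (P *v v) (- (P *v v)) P"

lemma a1_eq: "a1 = (M / N) * (1 / lam)"
  using N lam_pos by (simp add: a1_def HH_def power2_eq_square)

lemma ei_inv: "invertible ei" and ei_ii: "matrix_inv ei = e"
  using inv_invertible[OF e] inv_inv[OF e] by auto

lemma S_eq: "matrix_inv gg ** hh = matrix_inv EE ** Lg ** EE"
  unfolding gg_def hh_def EE_def Nsh_def Lg_def a1_def P_alt
  using FRAME_L[OF _ e chi_sym, of N q v HH] N by simp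

lemma EE_invertible: "invertible EE" unfolding EE_def using frame_invertible[of N e] N e by simp

lemma Vg_eq: "Ymat k (matrix_inv gg ** hh) = matrix_inv EE ** Ymat k Lg ** EE"
proof -
  have i: "invertible (matrix_inv EE)" by (rule inv_invertible[OF EE_invertible])
  show ?thesis unfolding S_eq using Ymat_sim[OF i, of k Lg] inv_inv[OF EE_invertible] by simp
qed

lemma Lg_core: "Ymat k Lg = blk (esym k P) (- (Ymat (k - 1) P *v (P *v v))) (P *v (Ymat (k - 1) P *v v))
            (Ymat k Dc - outer v (Ymat (k - 1) P *v (P *v v)) + a1 *\<^sub>R Ymat (k - 1) P)"
  unfolding Lg_def Dc_def using CORE[OF P_sym, where v=v and a=a1 and k=k] by simp

lemma projg:
  "proj_rho gg N Nsh (matrix_inv EE ** blk y r c Sb ** EE) = - y"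
  "proj_j gg N Nsh (matrix_inv EE ** blk y r c Sb ** EE) = - (transpose e *v c)"
  "proj_J gg N Nsh (transpose e ** e) (matrix_inv EE ** blk y r c Sb ** EE) = ei ** Sb ** e"
  using PROJ[of N e Nsh y r c Sb] N e unfolding gg_def EE_def by auto

lemma B_sim: "ei ** Lh ** m = ei ** P ** matrix_inv ei"
  unfolding ei_ii P_def by (simp add: matrix_mul_assoc[symmetric] eiL)

lemma Dt_sim: "ei ** Lhi ** m = ei ** Dc ** matrix_inv ei"
  unfolding ei_ii Dc_alt by (simp add: matrix_mul_assoc[symmetric] eiL)

lemma cancel_e: "X ** e ** ei = X" "X ** ei ** e = X" "e ** (ei ** X) = X" "ei ** (e ** X) = X"
  "e *v (ei *v x) = x" "ei *v (e *v x) = x"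
  by (simp_all add: matrix_mul_assoc[symmetric] eiL eiR matrix_vector_mul_assoc)
    (simp_all add: matrix_mul_assoc eiL eiR)

lemma B_eq: "ei ** Lh ** m = ei ** P ** e" using B_sim ei_ii by simp
lemma YB_eq: "Ymat j (ei ** Lh ** m) = ei ** Ymat j P ** e"
  using Ymat_sim[OF ei_inv, of j P] by (simp add: B_eq ei_ii)
lemma EB_eq: "esym j (ei ** Lh ** m) = esym j P"
  unfolding B_sim esym_sim[OF ei_inv] ..
lemma YDt_eq: "Ymat j (ei ** Lhi ** m) = ei ** Ymat j Dc ** e"
  using Ymat_sim[OF ei_inv, of j Dc] Dt_sim by (simp add: ei_ii)
lemma EDt_eq: "esym j (ei ** Lhi ** m) = esym j Dc"
  unfolding Dt_sim esym_sim[OF ei_inv] ..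

lemma YDc_v: "Ymat j Dc *v v = Ymat j P *v v"
  unfolding Dc_def Ymat_rank1 ..

lemma Vg_rho: "proj_rho gg N Nsh (Ymat k (matrix_inv gg ** hh)) = - esym k (ei ** Lh ** m)"
  unfolding Vg_eq Lg_core B_sim esym_sim[OF ei_inv] projg ..

lemma Vg_j: "proj_j gg N Nsh (Ymat k (matrix_inv gg ** hh))
   = - ((transpose e ** e) *v ((ei ** Lh ** m ** Ymat (k - 1) (ei ** Lhi ** m)) *v (ei *v v)))"
proof -
  have "(ei ** Lh ** m ** Ymat (k - 1) (ei ** Lhi ** m)) *v (ei *v v) = ei *v (P *v (Ymat (k - 1) P *v v))"
    unfolding B_eq YDt_eq by (simp add: matrix_mul_assoc cancel_e matrix_vector_mul_assoc[symmetric] YDc_v)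
  hence "(transpose e ** e) *v ((ei ** Lh ** m ** Ymat (k - 1) (ei ** Lhi ** m)) *v (ei *v v))
      = transpose e *v (P *v (Ymat (k - 1) P *v v))"
    by (simp add: matrix_vector_mul_assoc[symmetric] cancel_e del: transpose_matrix_vector)
  thus ?thesis unfolding Vg_eq Lg_core projg by simp
qed

lemma Vg_J: "proj_J gg N Nsh (transpose e ** e) (Ymat k (matrix_inv gg ** hh))
   = esym k (ei ** Lhi ** m) *\<^sub>R mat 1 - ei ** Lh ** m ** Ymat (k - 1) (ei ** Lhi ** m)
     + (M / N) *\<^sub>R ((1 / lam) *\<^sub>R Ymat (k - 1) (ei ** Lh ** m))"
proof -
  have S: "Ymat k Dc - outer v (Ymat (k - 1) P *v (P *v v)) + a1 *\<^sub>R Ymat (k - 1) P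
       = esym k Dc *\<^sub>R mat 1 - P ** Ymat (k - 1) Dc + a1 *\<^sub>R Ymat (k - 1) P"
    using SIMP_S[OF P_sym, of k v] by (simp add: Dc_def)
  show ?thesis
    unfolding Vg_eq Lg_core projg S YDt_eq EDt_eq YB_eq
    by (simp add: B_eq a1_eq mm_simps matrix_mul_assoc cancel_e eiL)
qed

end


context mdata begin

definition "Msh = q - M *\<^sub>R (mi *v v)"
definition "ff = adm (- (M ^ 2)) (transpose m ** m) Msh"
definition "FF = frame M m Msh"
definition "a2 = HH / M^2"
definition "Lf = blk (a2 - (- v) \<bullet> (P2 *v (- v))) (P2 *v (- v)) (- (P2 *v (- v))) P2"

lemma a2_eq: "a2 = (N / M) * (1 / lam)"
  using M lam_pos by (simp add: a2_def HH_def power2_eq_square)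

lemma Msh_alt: "Msh = q + M *\<^sub>R (mi *v (- v))"
  by (simp add: Msh_def mv_neg)

lemma mi_inv: "invertible mi" and mi_ii: "matrix_inv mi = m"
  using inv_invertible[OF m] inv_inv[OF m] by auto

lemma Sf_eq: "matrix_inv ff ** hh = matrix_inv FF ** Lf ** FF"
  unfolding ff_def hh_def FF_def Msh_alt Lf_def a2_def P2_alt
  using FRAME_L[OF _ m chi_sym, of M q "- v" HH] M by simp

lemma FF_invertible: "invertible FF" unfolding FF_def using frame_invertible[of M m] M m by simp

lemma cancel_m: "X ** m ** mi = X" "X ** mi ** m = X" "m ** (mi ** X) = X" "mi ** (m ** X) = X"
  "m *v (mi *v x) = x" "mi *v (m *v x) = x"
  by (simp_all add: matrix_mul_assoc[symmetric] miL miR matrix_vector_mul_assoc)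
    (simp_all add: matrix_mul_assoc miL miR)

lemma cancel_L: "X ** Lh ** Lhi = X" "X ** Lhi ** Lh = X" "Lh ** (Lhi ** X) = X" "Lhi ** (Lh ** X) = X"
  "Lh *v (Lhi *v x) = x" "Lhi *v (Lh *v x) = x"
  by (simp_all add: matrix_mul_assoc[symmetric] LhL LhR matrix_vector_mul_assoc)
    (simp_all add: matrix_mul_assoc LhL LhR)

lemma Hm_eq: "transpose (matrix_inv EE) ** hh ** matrix_inv FF = blk (- lam) (- lam *\<^sub>R v) (lam *\<^sub>R v) Lh"
proof -
  have PhiE: "Xi q ** matrix_inv EE = blk (1 / N) 0 (- (ei *v v)) ei"
    unfolding EE_def Nsh_def using Phi_lemma[OF _ e, of N q v] N by simp
  have PhiF: "Xi q ** matrix_inv FF = blk (1 / M) 0 (- (mi *v (- v))) mi"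
    unfolding FF_def Msh_alt using Phi_lemma[OF _ m, of M q "- v"] M by simp
  have F1: "transpose ei ** chi ** mi = Lh"
  proof -
    have "transpose ei ** chi ** mi = transpose (e ** ei) ** Lh ** (m ** mi)"
      by (simp add: chi_def matrix_transpose_mul matrix_mul_assoc)
    thus ?thesis by (simp add: eiR miR)
  qed
  have F2: "transpose ei ** chi *v (mi *v v) = lam *\<^sub>R v"
    using F1 R0_v by (simp add: matrix_vector_mul_assoc del: transpose_matrix_vector vector_transpose_matrix)
  have F2': "transpose ei *v (chi *v (mi *v v)) = lam *\<^sub>R v"
    using F2 by (simp add: matrix_vector_mul_assoc matrix_mul_assoc del: transpose_matrix_vector vector_transpose_matrix)
  have mm1: "transpose mi ** transpose m = mat 1"
    using miR by (metis matrix_transpose_mul transpose_mat)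
  have F3: "transpose mi *v (transpose chi *v (ei *v v)) = lam *\<^sub>R v"
  proof -
    have tc: "transpose chi = transpose m ** Lh ** e" using chi_sym chi_alt by simp
    have "transpose mi *v (transpose chi *v (ei *v v)) = (transpose mi ** transpose m) ** Lh ** (e ** ei) *v v"
      unfolding tc by (simp add: matrix_vector_mul_assoc matrix_mul_assoc
          del: transpose_matrix_vector vector_transpose_matrix)
    thus ?thesis by (simp add: mm1 eiR R0_v)
  qed
  have F4: "- (HH / (N * M)) - lam * (v \<bullet> v) = - lam"
  proof -
    have "HH / (N * M) = 1 / lam" using N M lam_pos by (simp add: HH_def)
    moreover have "lam * (v \<bullet> v) = lam - 1 / lam" using lam_sq lam_pos by (simp add: field_simps power2_eq_square)
    ultimately show ?thesis by simp
  qed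
  have "transpose (matrix_inv EE) ** hh ** matrix_inv FF
      = transpose (Xi q ** matrix_inv EE) ** blockdiag (- HH) chi ** (Xi q ** matrix_inv FF)"
    unfolding hh_def adm_def by (simp add: matrix_transpose_mul matrix_mul_assoc)
  thus ?thesis
    unfolding PhiE PhiF
    by (simp add: blk_transpose blockdiag_blk blk_mult mv_neg inner_mv_left F1 F2 F2' F3 F4
        del: transpose_matrix_vector vector_transpose_matrix)
qed

lemma Hm_cond: "transpose (matrix_inv EE) ** hh ** matrix_inv FF ** eta ** transpose (transpose (matrix_inv EE) ** hh ** matrix_inv FF) = eta"
proof -
  have l0: "lam * lam - lam * lam * (v \<bullet> v) = 1" using lam_sq by (simp add: power2_eq_square right_diff_distrib)
  have l: "lam * lam * (v \<bullet> v) = lam * lam - 1" using l0 by linarith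
  have l3: "v \<bullet> v + lam * (lam * (v \<bullet> v * (v \<bullet> v))) = lam * (lam * (v \<bullet> v))"
  proof -
    have "lam * (lam * (v \<bullet> v * (v \<bullet> v))) = (lam * lam * (v \<bullet> v)) * (v \<bullet> v)"
      by (simp only: mult.assoc)
    also have "\<dots> = (lam * lam - 1) * (v \<bullet> v)" unfolding l ..
    finally have "lam * (lam * (v \<bullet> v * (v \<bullet> v))) = (lam * lam - 1) * (v \<bullet> v)" .
    thus ?thesis by (simp add: algebra_simps)
  qed
  have l4: "lam * (lam * (v \<bullet> v)) - lam * lam = - 1" using l by (simp add: mult.assoc)
  show ?thesis unfolding Hm_eq
    by (simp add: blk_transpose eta_def blk_mult R0_sym R0_v R0_sq mv_neg outer_scaleR outer_neg l3 l4 power2_eq_square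
        algebra_simps del: transpose_matrix_vector vector_transpose_matrix)
qed

end


context mdata begin

lemma Sinv: "matrix_inv (matrix_inv gg ** hh) = matrix_inv ff ** hh"
  using BIM[where h=hh and e=e and m=m and Nsh=Nsh and Msh=Msh and N=N and M=M] N M e m
    adm_sym[OF chi_sym] Hm_cond
  unfolding gg_def ff_def EE_def FF_def hh_def by simp

lemma Vf_eq: "Ymat j (matrix_inv (matrix_inv gg ** hh)) = matrix_inv FF ** Ymat j Lf ** FF"
proof -
  have i: "invertible (matrix_inv FF)" by (rule inv_invertible[OF FF_invertible])
  show ?thesis unfolding Sinv Sf_eq using Ymat_sim[OF i, of j Lf] inv_inv[OF FF_invertible] by simp
qed

lemma Lf_core: "Ymat j Lf = blk (esym j P2) (- (Ymat (j - 1) P2 *v (P2 *v (- v)))) (P2 *v (Ymat (j - 1) P2 *v (- v)))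
            (Ymat j D2 - outer (- v) (Ymat (j - 1) P2 *v (P2 *v (- v))) + a2 *\<^sub>R Ymat (j - 1) P2)"
  unfolding Lf_def D2_def using CORE[OF P2_sym, where v="- v" and a=a2 and k=j] by simp

lemma projf:
  "proj_rho ff M Msh (matrix_inv FF ** blk y r c Sb ** FF) = - y"
  "proj_j ff M Msh (matrix_inv FF ** blk y r c Sb ** FF) = - (transpose m *v c)"
  "proj_J ff M Msh (transpose m ** m) (matrix_inv FF ** blk y r c Sb ** FF) = mi ** Sb ** m"
  using PROJ[of M m Msh y r c Sb] M m unfolding ff_def FF_def by auto

lemma detE: "det e \<noteq> 0" using e invertible_det_nz by blast
lemma detM: "det m \<noteq> 0" using m invertible_det_nz by blast
lemma det_Lhi: "det Lhi = 1 / lam" using det_inv[OF Lh_invertible] det_R0 by simp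

lemma Dc_right: "Dc ** (e ** mi ** Lh) = mat 1"
  unfolding Dc_alt by (simp add: matrix_mul_assoc cancel_e cancel_m LhL)
lemma Dc_invertible: "invertible Dc" using Dc_right invertibleI by blast
lemma Dc_inv: "matrix_inv Dc = e ** mi ** Lh" using Dc_right inv_eq by blast

lemma P_right: "P ** (e ** mi ** Lhi) = mat 1"
  unfolding P_def by (simp add: matrix_mul_assoc cancel_e cancel_m LhR)
lemma P_invertible: "invertible P" using P_right invertibleI by blast
lemma P_inv: "matrix_inv P = e ** mi ** Lhi" using P_right inv_eq by blast

lemma Lhi_invertible: "invertible Lhi" using inv_invertible[OF Lh_invertible] .
lemma Lhi_inv: "matrix_inv Lhi = Lh" using inv_inv[OF Lh_invertible] .

lemma P2_sim: "P2 = Lh ** matrix_inv Dc ** matrix_inv Lh"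
  unfolding Dc_inv P2_def by (simp add: matrix_mul_assoc cancel_L)

lemma D2_sim: "D2 = Lhi ** matrix_inv P ** matrix_inv Lhi"
  unfolding P_inv D2_alt Lhi_inv by (simp add: matrix_mul_assoc cancel_L)

lemma det_Dc: "1 / det Dc = lam * det (e ** mi)"
proof -
  have "det Dc = (1 / lam) * det m * (1 / det e)"
    unfolding Dc_alt by (simp add: det_mul det_Lhi det_inv[OF e])
  thus ?thesis using detE detM lam_pos by (simp add: det_mul det_inv[OF m])
qed

lemma det_P: "1 / det P = det (e ** mi) / lam"
proof -
  have "det P = lam * det m * (1 / det e)"
    unfolding P_def by (simp add: det_mul det_R0 det_inv[OF e])
  thus ?thesis using detE detM lam_pos by (simp add: det_mul det_inv[OF m])
qed

end


context mdata begin

abbreviation "cc \<equiv> det (e ** mi)"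

lemma idx1: "int CARD('s) - (int CARD('s) + 1 - k) = k - 1" by simp
lemma idx2: "int CARD('s) + 1 - k - 1 = int CARD('s) - k" by simp

lemma E_P2: "esym (int CARD('s) + 1 - k) P2 = lam * cc * esym (k - 1) Dc"
proof -
  have "esym (int CARD('s) + 1 - k) P2 = esym (int CARD('s) + 1 - k) (matrix_inv Dc)"
    unfolding P2_sim by (rule esym_sim[OF Lh_invertible])
  also have "\<dots> = esym (k - 1) Dc / det Dc" unfolding esym_inv[OF Dc_invertible] idx1 ..
  also have "\<dots> = lam * cc * esym (k - 1) Dc" using det_Dc by (simp add: divide_inverse mult_ac)
  finally show ?thesis .
qed

lemma Y_P2: "Ymat (int CARD('s) + 1 - k - 1) P2 = Lh ** ((1 / det Dc) *\<^sub>R (Dc ** Ymat (k - 1) Dc)) ** Lhi"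
proof -
  have "Ymat (int CARD('s) + 1 - k - 1) P2 = Lh ** Ymat (int CARD('s) - k) (matrix_inv Dc) ** matrix_inv Lh"
    unfolding P2_sim idx2 by (rule Ymat_sim[OF Lh_invertible])
  thus ?thesis unfolding Ymat_inv[OF Dc_invertible] .
qed

lemma E_D2: "esym (int CARD('s) + 1 - k) D2 = (cc / lam) * esym (k - 1) P"
proof -
  have "esym (int CARD('s) + 1 - k) D2 = esym (int CARD('s) + 1 - k) (matrix_inv P)"
    unfolding D2_sim by (rule esym_sim[OF Lhi_invertible])
  also have "\<dots> = esym (k - 1) P / det P" unfolding esym_inv[OF P_invertible] idx1 ..
  also have "\<dots> = (cc / lam) * esym (k - 1) P" using det_P by (simp add: divide_inverse mult_ac)
  finally show ?thesis .
qed

lemma Y_D2: "Ymat (int CARD('s) + 1 - k - 1) D2 = Lhi ** ((1 / det P) *\<^sub>R (P ** Ymat (k - 1) P)) ** Lh"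
proof -
  have "Ymat (int CARD('s) + 1 - k - 1) D2 = Lhi ** Ymat (int CARD('s) - k) (matrix_inv P) ** matrix_inv Lhi"
    unfolding D2_sim idx2 by (rule Ymat_sim[OF Lhi_invertible])
  thus ?thesis unfolding Ymat_inv[OF P_invertible] Lhi_inv .
qed

lemma Vf_rho: "proj_rho ff M Msh (Ymat (int CARD('s) + 1 - k) (matrix_inv (matrix_inv gg ** hh)))
    = - lam * esym (k - 1) (ei ** Lhi ** m) * cc"
  unfolding Vf_eq Lf_core projf E_P2 EDt_eq by simp

lemma H1: "P2 ** Lh ** Dc = Lh"
  unfolding P2_def Dc_alt by (simp add: matrix_mul_assoc cancel_e cancel_m cancel_L)

lemma H2: "transpose m ** Lh = transpose e ** P"
proof -
  have "transpose m ** Lh = transpose m ** Lh ** e ** ei" by (simp add: cancel_e)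
  also have "transpose m ** Lh ** e = transpose e ** Lh ** m" using chi_alt by (simp add: chi_def)
  finally show ?thesis by (simp add: P_def matrix_mul_assoc)
qed

lemma Vf_j: "proj_j ff M Msh (Ymat (int CARD('s) + 1 - k) (matrix_inv (matrix_inv gg ** hh)))
    = - cc *\<^sub>R proj_j gg N Nsh (Ymat k (matrix_inv gg ** hh))"
proof -
  let ?x = "Ymat (k - 1) Dc *v v"
  have a: "Ymat (int CARD('s) + 1 - k - 1) P2 *v v = (cc * lam * (1 / lam)) *\<^sub>R (Lh *v (Dc *v ?x))"
    unfolding Y_P2 using det_Dc
    by (simp add: matrix_vector_mul_assoc[symmetric] Lhi_v mv_scaleR matrix_vector_mult_scaleR mult_ac)
  have b: "P2 *v (Lh *v (Dc *v ?x)) = Lh *v ?x"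
    using H1 by (simp add: matrix_vector_mul_assoc matrix_mul_assoc)
  have c: "transpose m *v (Lh *v ?x) = transpose e *v (P *v ?x)"
    using H2 by (simp add: matrix_vector_mul_assoc matrix_mul_assoc del: transpose_matrix_vector vector_transpose_matrix)
  have "proj_j ff M Msh (Ymat (int CARD('s) + 1 - k) (matrix_inv (matrix_inv gg ** hh)))
      = transpose m *v (P2 *v (Ymat (int CARD('s) + 1 - k - 1) P2 *v v))"
    unfolding Vf_eq Lf_core projf by (simp add: mv_neg del: transpose_matrix_vector vector_transpose_matrix)
  also have "\<dots> = cc *\<^sub>R (transpose e *v (P *v ?x))"
    unfolding a using lam_pos b c
    by (simp add: matrix_vector_mult_scaleR del: transpose_matrix_vector vector_transpose_matrix)
  also have "\<dots> = - cc *\<^sub>R proj_j gg N Nsh (Ymat k (matrix_inv gg ** hh))"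
    unfolding Vg_eq Lg_core projg YDc_v by simp
  finally show ?thesis .
qed

end


context mdata begin

lemma comm_l: "A ** X ** Ymat j X = A ** Ymat j X ** (X::real^'s^'s)"
  by (simp add: matrix_mul_assoc[symmetric] Ymat_comm)

lemma T1: "mi ** (Lh ** Lh) ** m ** (ei ** Ymat j P ** e) = mi ** Lh ** Ymat j P ** Lh ** m"
proof -
  have Pe: "P ** e = Lh ** m" unfolding P_def by (simp add: cancel_e)
  have "mi ** (Lh ** Lh) ** m ** (ei ** Ymat j P ** e) = mi ** Lh ** P ** Ymat j P ** e"
    by (simp add: matrix_mul_assoc P_def)
  also have "\<dots> = mi ** Lh ** Ymat j P ** (P ** e)"
  proof -
    have "mi ** Lh ** P ** Ymat j P = mi ** Lh ** Ymat j P ** P" by (rule comm_l)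
    hence "mi ** Lh ** P ** Ymat j P ** e = mi ** Lh ** Ymat j P ** P ** e" by simp
    thus ?thesis by (simp add: matrix_mul_assoc)
  qed
  finally show ?thesis unfolding Pe by (simp add: matrix_mul_assoc)
qed

lemma T2: "ei ** Dc ** e ** (ei ** Ymat j Dc ** e) = ei ** Ymat j Dc ** Lhi ** m"
proof -
  have De: "Dc ** e = Lhi ** m" unfolding Dc_alt by (simp add: cancel_e)
  have "ei ** Dc ** e ** (ei ** Ymat j Dc ** e) = ei ** Ymat j Dc ** (Dc ** e)"
    by (simp add: matrix_mul_assoc cancel_e comm_l)
  thus ?thesis unfolding De by (simp add: matrix_mul_assoc)
qed

lemma T3: "mi ** P2 ** Lhi ** P = mi ** Lh"
  unfolding P2_def P_def by (simp add: matrix_mul_assoc cancel_e cancel_m cancel_L)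

lemma T4: "mi ** Lh ** Dc = ei"
  unfolding Dc_alt by (simp add: matrix_mul_assoc cancel_e cancel_m cancel_L miL)

lemma Vf_J: "proj_J ff M Msh (transpose m ** m) (Ymat (int CARD('s) + 1 - k) (matrix_inv (matrix_inv gg ** hh)))
  = cc *\<^sub>R (((1 / lam) * esym (k - 1) (ei ** Lh ** m)) *\<^sub>R mat 1
      - mi ** (Lh ** Lh) ** m ** ((1 / lam) *\<^sub>R Ymat (k - 1) (ei ** Lh ** m))
      + (N / M) *\<^sub>R (ei ** Lhi ** m ** Ymat (k - 1) (ei ** Lhi ** m)))"
proof -
  let ?k = "int CARD('s) + 1 - k"
  let ?Yp = "Ymat (k - 1) P" and ?Yd = "Ymat (k - 1) Dc"
  have S: "Ymat ?k D2 - outer (- v) (Ymat (?k - 1) P2 *v (P2 *v (- v))) + a2 *\<^sub>R Ymat (?k - 1) P2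
      = esym ?k D2 *\<^sub>R mat 1 - P2 ** Ymat (?k - 1) D2 + a2 *\<^sub>R Ymat (?k - 1) P2"
    using SIMP_S[OF P2_sym, of ?k "- v"] by (simp add: D2_def)
  have lhs: "proj_J ff M Msh (transpose m ** m) (Ymat ?k (matrix_inv (matrix_inv gg ** hh)))
      = mi ** (esym ?k D2 *\<^sub>R mat 1 - P2 ** Ymat (?k - 1) D2 + a2 *\<^sub>R Ymat (?k - 1) P2) ** m"
    unfolding Vf_eq Lf_core projf S ..
  have t2: "mi ** (P2 ** Ymat (?k - 1) D2) ** m = (1 / det P) *\<^sub>R (mi ** Lh ** ?Yp ** Lh ** m)"
  proof -
    have "mi ** (P2 ** Ymat (?k - 1) D2) ** m = (1 / det P) *\<^sub>R (mi ** P2 ** Lhi ** P ** ?Yp ** Lh ** m)"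
      unfolding Y_D2 by (simp add: mm_simps matrix_mul_assoc)
    also have "mi ** P2 ** Lhi ** P ** ?Yp ** Lh ** m = mi ** Lh ** ?Yp ** Lh ** m"
      using T3 by (simp add: matrix_mul_assoc[symmetric])
    finally show ?thesis .
  qed
  have t3: "mi ** Ymat (?k - 1) P2 ** m = (1 / det Dc) *\<^sub>R (ei ** ?Yd ** Lhi ** m)"
  proof -
    have "mi ** Ymat (?k - 1) P2 ** m = (1 / det Dc) *\<^sub>R (mi ** Lh ** Dc ** ?Yd ** Lhi ** m)"
      unfolding Y_P2 by (simp add: mm_simps matrix_mul_assoc)
    also have "mi ** Lh ** Dc ** ?Yd ** Lhi ** m = ei ** ?Yd ** Lhi ** m"
      using T4 by (simp add: matrix_mul_assoc[symmetric])
    finally show ?thesis .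
  qed
  have "mi ** (esym ?k D2 *\<^sub>R mat 1 - P2 ** Ymat (?k - 1) D2 + a2 *\<^sub>R Ymat (?k - 1) P2) ** m
      = esym ?k D2 *\<^sub>R mat 1 - mi ** (P2 ** Ymat (?k - 1) D2) ** m + a2 *\<^sub>R (mi ** Ymat (?k - 1) P2 ** m)"
    by (simp add: mm_simps cancel_m matrix_mul_assoc miL)
  also have "\<dots> = ((cc / lam) * esym (k - 1) P) *\<^sub>R mat 1 - (cc / lam) *\<^sub>R (mi ** Lh ** ?Yp ** Lh ** m)
      + (cc * (N / M)) *\<^sub>R (ei ** ?Yd ** Lhi ** m)"
    unfolding t2 t3 E_D2 det_P det_Dc a2_eq using lam_pos by (simp add: mult_ac)
  also have "\<dots> = cc *\<^sub>R (((1 / lam) * esym (k - 1) (ei ** Lh ** m)) *\<^sub>R mat 1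
      - mi ** (Lh ** Lh) ** m ** ((1 / lam) *\<^sub>R Ymat (k - 1) (ei ** Lh ** m))
      + (N / M) *\<^sub>R (ei ** Lhi ** m ** Ymat (k - 1) (ei ** Lhi ** m)))"
  proof -
    have Dt_eq: "ei ** Lhi ** m = ei ** Dc ** e" using Dt_sim ei_ii by simp
    show ?thesis
      unfolding EB_eq YB_eq YDt_eq
      unfolding Dt_eq mm_rscale T1 T2
      using lam_pos by (simp add: scaleR_add_right scaleR_diff_right mult_ac)
  qed
  finally show ?thesis unfolding lhs .
qed

end


theorem mainTheorem5:
  fixes N M :: real and q v :: "real^'s" and e m :: "real^'s^'s" and k :: int
  assumes "N > 0" and "M > 0" and "v \<bullet> v < 1"
    and "invertible e" and "invertible m"
    and "posdef (transpose e ** inv_sqrt (mat 1 - outer v v) ** m)"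
  shows
    "let d = int CARD('s) + 1;
         lam = 1 / sqrt (1 - v \<bullet> v);
         Lh = inv_sqrt (mat 1 - outer v v);
         chi = transpose e ** Lh ** m;
         gam = transpose e ** e;
         phi = transpose m ** m;
         n = matrix_inv e *v v;
         Qt = matrix_inv m ** (Lh ** Lh) ** m;
         Dt = matrix_inv e ** matrix_inv Lh ** m;
         B = matrix_inv e ** Lh ** m;
         U = (1 / lam) *\<^sub>R Ymat (k - 1) B;
         Ut = Dt ** Ymat (k - 1) Dt;
         W = B ** Ymat (k - 1) Dt;
         V = esym k Dt;
         Vt = (1 / lam) * esym (k - 1) B;
         HH = N * M / lam;
         Nsh = q + N *\<^sub>R (matrix_inv e *v v);
         Msh = q - M *\<^sub>R (matrix_inv m *v v);
         h = adm (- HH) chi q;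
         g = adm (- (N ^ 2)) gam Nsh;
         f = adm (- (M ^ 2)) phi Msh;
         S = matrix_inv g ** h;
         Vg = Ymat k S;
         Vf = Ymat (d - k) (matrix_inv S);
         c = det (e ** matrix_inv m)
     in proj_rho g N Nsh Vg = - esym k B
      \<and> proj_j g N Nsh Vg = - (gam *v (W *v n))
      \<and> proj_J g N Nsh gam Vg = V *\<^sub>R mat 1 - W + (M / N) *\<^sub>R U
      \<and> proj_rho f M Msh Vf = - lam * esym (k - 1) Dt * c
      \<and> proj_j f M Msh Vf = - c *\<^sub>R proj_j g N Nsh Vg
      \<and> proj_J f M Msh phi Vf = c *\<^sub>R (Vt *\<^sub>R mat 1 - Qt ** U + (N / M) *\<^sub>R Ut)"
proof -
  interpret lorentz v using assms(3) by unfold_locales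
  interpret mdata v N M q e m using assms by unfold_locales auto
  note defs = gg_def Nsh_def hh_def HH_def chi_def ff_def Msh_def
  show ?thesis unfolding Let_def Lh_eq' lam_def[symmetric]
    by (intro conjI Vg_rho[unfolded defs] Vg_j[unfolded defs] Vg_J[unfolded defs]
        Vf_rho[unfolded defs] Vf_j[unfolded defs] Vf_J[unfolded defs])
qed


end
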